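(* Let $\varphi:(\tilde R,\tilde{\mathfrak{m}})\to(R,\mathfrak{m})$ be a flat homomorphism of Noetherian local rings of positive characteristic $p$ such that $\varphi(\tilde{\mathfrak{m}})R=\mathfrak{m}$. Then $\operatorname{F-depth}_L(\tilde R)=\operatorname{F-depth}_L(R)$.
   Context: For a Noetherian local ring $(A,\mathfrak{n})$ of characteristic $p>0$ and $s\in\mathbb{N}$, let $F^s:H^i_{\mathfrak n}(A)\to H^i_{\mathfrak n}(A)$ be the map induced on local cohomology by the $s$-th power of the Frobenius $A\to A$, $r\mapsto r^{p^s}$. The F-depth $\operatorname{F-depth}_L(A)$ is the smallest $i$ such that $F^s$ does not send $H^i_{\mathfrak n}(A)$ to zero for any $s$ (i.e. $F^s(H^i_{\mathfrak n}(A))\ne0$ for all $s\in\mathbb{N}$). *)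

theory Defs
  imports Main "HOL-Library.Extended_Nat" "HOL-Computational_Algebra.Primes"
begin

definition is_ideal :: "'a::comm_ring_1 set \<Rightarrow> bool" where
  "is_ideal I \<longleftrightarrow> 0 \<in> I \<and> (\<forall>a\<in>I. \<forall>b\<in>I. a + b \<in> I) \<and> (\<forall>r. \<forall>a\<in>I. r * a \<in> I)"

definition ideal_gen :: "'a::comm_ring_1 set \<Rightarrow> 'a set" where
  "ideal_gen S = {x. \<exists>(n::nat) (r::nat \<Rightarrow> 'a) (s::nat \<Rightarrow> 'a).
      (\<forall>i<n. s i \<in> S) \<and> x = (\<Sum>i<n. r i * s i)}"

definition maximal_ideal :: "'a::comm_ring_1 set \<Rightarrow> bool" where
  "maximal_ideal m \<longleftrightarrow> is_ideal m \<and> 1 \<notin> m \<and>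
     (\<forall>J. is_ideal J \<and> m \<subseteq> J \<and> 1 \<notin> J \<longrightarrow> J = m)"

definition noetherian_ring :: "'a::comm_ring_1 itself \<Rightarrow> bool" where
  "noetherian_ring _ \<longleftrightarrow> (\<forall>I::'a set. is_ideal I \<longrightarrow> (\<exists>xs. ideal_gen (set xs) = I))"

definition local_ring_max :: "'a::comm_ring_1 set \<Rightarrow> bool" where
  "local_ring_max m \<longleftrightarrow> maximal_ideal m \<and> (\<forall>m'. maximal_ideal m' \<longrightarrow> m' = m)"

definition ring_homomorphism :: "('a::comm_ring_1 \<Rightarrow> 'b::comm_ring_1) \<Rightarrow> bool" where
  "ring_homomorphism f \<longleftrightarrow> f 1 = 1 \<and> (\<forall>a b. f (a + b) = f a + f b) \<and> (\<forall>a b. f (a * b) = f a * f b)"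

text \<open>Flatness of the algebra f : A -> B, via the equational criterion of flatness.\<close>
definition flat_hom :: "('a::comm_ring_1 \<Rightarrow> 'b::comm_ring_1) \<Rightarrow> bool" where
  "flat_hom f \<longleftrightarrow> (\<forall>(n::nat) (a::nat \<Rightarrow> 'a) (b::nat \<Rightarrow> 'b).
      (\<Sum>i<n. f (a i) * b i) = 0 \<longrightarrow>
      (\<exists>(k::nat) (c::nat \<Rightarrow> nat \<Rightarrow> 'a) (y::nat \<Rightarrow> 'b).
          (\<forall>i<n. b i = (\<Sum>j<k. f (c i j) * y j)) \<and>
          (\<forall>j<k. (\<Sum>i<n. a i * c i j) = 0)))"

text \<open>For generators xs = [x_0,..,x_{n-1}] of m, the Cech complex has
  C^k = direct sum over subsets I of {..<n} with card I = k of A_{x_I}, x_I = prod of x_i, i in I.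
  A cochain of degree k is represented by numerators z I and a common exponent t,
  standing for the element z I / x_I^t of A_{x_I}.\<close>

definition xprod :: "'a::comm_ring_1 list \<Rightarrow> nat set \<Rightarrow> 'a" where
  "xprod xs I = (\<Prod>i\<in>I. xs ! i)"

text \<open>a/1 is zero in the localization A_{x_I}.\<close>
definition loc_zero :: "'a::comm_ring_1 list \<Rightarrow> nat set \<Rightarrow> 'a \<Rightarrow> bool" where
  "loc_zero xs I a \<longleftrightarrow> (\<exists>N. xprod xs I ^ N * a = 0)"

definition cech_sign :: "nat set \<Rightarrow> nat \<Rightarrow> 'a::comm_ring_1" where
  "cech_sign J j = (-1) ^ card {j'\<in>J. j' < j}"

text \<open>Numerator (over x_J^t) of the J-component of the Cech differential of (z,t).\<close>
definition cech_d :: "'a::comm_ring_1 list \<Rightarrow> (nat set \<Rightarrow> 'a) \<Rightarrow> nat \<Rightarrow> nat set \<Rightarrow> 'a" where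
  "cech_d xs z t J = (\<Sum>j\<in>J. cech_sign J j * z (J - {j}) * (xs ! j) ^ t)"

definition cech_cocycle :: "'a::comm_ring_1 list \<Rightarrow> nat \<Rightarrow> (nat set \<Rightarrow> 'a) \<Rightarrow> nat \<Rightarrow> bool" where
  "cech_cocycle xs k z t \<longleftrightarrow>
     (\<forall>J. J \<subseteq> {..<length xs} \<and> card J = Suc k \<longrightarrow> loc_zero xs J (cech_d xs z t J))"

definition cech_coboundary :: "'a::comm_ring_1 list \<Rightarrow> nat \<Rightarrow> (nat set \<Rightarrow> 'a) \<Rightarrow> nat \<Rightarrow> bool" where
  "cech_coboundary xs k z t \<longleftrightarrow>
     (if k = 0 then (\<forall>I. I \<subseteq> {..<length xs} \<and> card I = 0 \<longrightarrow> loc_zero xs I (z I))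
      else (\<exists>(y::nat set \<Rightarrow> 'a) u. \<forall>I. I \<subseteq> {..<length xs} \<and> card I = k \<longrightarrow>
              loc_zero xs I (z I * xprod xs I ^ u - cech_d xs y u I * xprod xs I ^ t)))"

text \<open>F^s does not send H^i_m(A) to zero: some class whose image under the map induced by
  r \<mapsto> r^(p^s) (on the Cech complex: a/x^t \<mapsto> a^(p^s)/x^(t p^s)) is nonzero.\<close>
definition frob_nonzero_on :: "'a::comm_ring_1 list \<Rightarrow> nat \<Rightarrow> nat \<Rightarrow> bool" where
  "frob_nonzero_on xs i s \<longleftrightarrow>
     (\<exists>z t. cech_cocycle xs i z t \<and>
        \<not> cech_coboundary xs i (\<lambda>I. z I ^ (CHAR('a) ^ s)) (t * CHAR('a) ^ s))"

definition fdepth_prop :: "'a::comm_ring_1 list \<Rightarrow> nat \<Rightarrow> bool" where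
  "fdepth_prop xs i \<longleftrightarrow> (\<forall>s. frob_nonzero_on xs i s)"

text \<open>F-depth_L of the local ring with maximal ideal m, computed via the Cech complex on
  a (chosen) finite list of generators of m; infinity if no such i exists.\<close>
definition F_depth_L :: "'a::comm_ring_1 set \<Rightarrow> enat" where
  "F_depth_L m = (let xs = (SOME xs. ideal_gen (set xs) = m) in
     if \<exists>i. fdepth_prop xs i then enat (LEAST i. fdepth_prop xs i) else \<infinity>)"

end

theory Submission
  imports Defs
begin


definition PP :: "(nat \<Rightarrow> 'a::comm_ring_1) \<Rightarrow> nat set \<Rightarrow> 'a" where
  "PP g I = (\<Prod>i\<in>I. g i)"

definition lzc :: "(nat \<Rightarrow> 'a::comm_ring_1) \<Rightarrow> 'a \<Rightarrow> nat set \<Rightarrow> 'a \<Rightarrow> bool" where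
  "lzc g c I a \<longleftrightarrow> (\<exists>N. (c * PP g I) ^ N * a = 0)"

definition dd :: "(nat \<Rightarrow> 'a::comm_ring_1) \<Rightarrow> (nat set \<Rightarrow> 'a) \<Rightarrow> nat \<Rightarrow> nat set \<Rightarrow> 'a" where
  "dd g z t J = (\<Sum>j\<in>J. cech_sign J j * z (J - {j}) * g j ^ t)"

lemma sign_sq: "cech_sign J j * cech_sign J j = (1::'a::comm_ring_1)"
  unfolding cech_sign_def by (simp flip: power_mult_distrib)

lemma sign_swap:
  assumes "finite K" "i \<in> K" "j \<notin> K"
  shows "cech_sign K i * cech_sign (insert j K - {i}) j =
         - (cech_sign (insert j K) i * cech_sign (insert j K) j :: 'a::comm_ring_1)"
proof -
  have ij: "i \<noteq> j" using assms by auto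
  have e1: "insert j K - {i} = insert j (K - {i})" using ij by auto
  have A1: "{j'\<in>insert j K. j' < j} = {j'\<in>K. j' < j}" by auto
  have A2: "{j'\<in>insert j (K - {i}). j' < j} = {j'\<in>K. j' < j} - {i}" by auto
  show ?thesis
  proof (cases "i < j")
    case True
    have c1: "card {j'\<in>K. j' < j} = Suc (card ({j'\<in>K. j' < j} - {i}))"
      using True assms by (subst card_Suc_Diff1[symmetric]) auto
    have B: "{j'\<in>insert j K. j' < i} = {j'\<in>K. j' < i}" using True by auto
    show ?thesis unfolding cech_sign_def e1 A1 A2 B c1 by (simp add: algebra_simps)
  next
    case False
    then have ji: "j < i" using ij by auto
    have A2': "{j'\<in>K. j' < j} - {i} = {j'\<in>K. j' < j}" using ji by auto
    have B: "{j'\<in>insert j K. j' < i} = insert j {j'\<in>K. j' < i}" using ji by auto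
    have c2: "card (insert j {j'\<in>K. j' < i}) = Suc (card {j'\<in>K. j' < i})"
      using assms by auto
    show ?thesis unfolding cech_sign_def e1 A1 A2 A2' B c2 by (simp add: algebra_simps)
  qed
qed

lemma PP_insert: "finite I \<Longrightarrow> j \<notin> I \<Longrightarrow> PP g (insert j I) = g j * PP g I"
  unfolding PP_def by simp

lemma PP_remove: "finite I \<Longrightarrow> j \<in> I \<Longrightarrow> PP g I = g j * PP g (I - {j})"
  unfolding PP_def by (metis prod.remove)

lemma dd_empty[simp]: "dd g z t {} = 0" unfolding dd_def by simp

lemma dd_cmult: "dd g (\<lambda>K. a * z K) t J = a * dd g z t J"
  unfolding dd_def by (simp add: sum_distrib_left algebra_simps)

lemma dd_add: "dd g (\<lambda>K. z K + y K) t J = dd g z t J + dd g y t J"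
  unfolding dd_def by (simp add: sum.distrib algebra_simps)

lemma dd_diff: "dd g (\<lambda>K. z K - y K) t J = dd g z t J - dd g y t J"
  unfolding dd_def by (simp add: sum_subtractf algebra_simps)

lemma dd_raise:
  assumes "finite I"
  shows "dd g (\<lambda>K. y K * PP g K ^ d) (u + d) I = PP g I ^ d * dd g y u I"
  unfolding dd_def sum_distrib_left
proof (rule sum.cong[OF refl])
  fix j assume "j \<in> I"
  then have "PP g I = g j * PP g (I - {j})" using assms PP_remove by blast
  then show "cech_sign I j * (y (I - {j}) * PP g (I - {j}) ^ d) * g j ^ (u + d) =
         PP g I ^ d * (cech_sign I j * y (I - {j}) * g j ^ u)"
    by (simp add: power_add power_mult_distrib algebra_simps)
qed

lemma dd_cong: "(\<And>j. j \<in> J \<Longrightarrow> z (J - {j}) = y (J - {j})) \<Longrightarrow> dd g z t J = dd g y t J"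
  unfolding dd_def by (rule sum.cong) auto



lemma lzc_0[simp]: "lzc g c I 0" unfolding lzc_def by auto

lemma lzc_mult: "lzc g c I a \<Longrightarrow> lzc g c I (b * a)"
  unfolding lzc_def
proof (elim exE)
  fix N assume "(c * PP g I) ^ N * a = 0"
  then have "(c * PP g I) ^ N * (b * a) = 0" by (simp add: mult.left_commute[of _ b])
  then show "\<exists>N. (c * PP g I) ^ N * (b * a) = 0" by blast
qed

lemma lzc_mult2: "lzc g c I a \<Longrightarrow> lzc g c I (a * b)"
  using lzc_mult by (metis mult.commute)

lemma pow_zero_mono: "(x::'a::comm_ring_1) ^ N * a = 0 \<Longrightarrow> N \<le> M \<Longrightarrow> x ^ M * a = 0"
proof -
  assume "x ^ N * a = 0" "N \<le> M"
  then obtain d where "M = N + d" using le_Suc_ex by blast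
  then have "x ^ M * a = x ^ d * (x ^ N * a)" by (simp add: power_add algebra_simps)
  then show ?thesis using \<open>x ^ N * a = 0\<close> by simp
qed

lemma lzc_add: "lzc g c I a \<Longrightarrow> lzc g c I b \<Longrightarrow> lzc g c I (a + b)"
  unfolding lzc_def
proof (elim exE)
  fix N M assume 1: "(c * PP g I) ^ N * a = 0" and 2: "(c * PP g I) ^ M * b = 0"
  have "(c * PP g I) ^ (N + M) * a = 0" using pow_zero_mono[OF 1] by simp
  moreover have "(c * PP g I) ^ (N + M) * b = 0" using pow_zero_mono[OF 2] by simp
  ultimately show "\<exists>N. (c * PP g I) ^ N * (a + b) = 0" by (metis distrib_left add_0)
qed

lemma lzc_uminus: "lzc g c I a \<Longrightarrow> lzc g c I (- a)"
  using lzc_mult[of g c I a "-1"] by simp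

lemma lzc_diff: "lzc g c I a \<Longrightarrow> lzc g c I b \<Longrightarrow> lzc g c I (a - b)"
  using lzc_add lzc_uminus by (metis diff_conv_add_uminus)

lemma lzc_sum: "finite A \<Longrightarrow> (\<And>x. x \<in> A \<Longrightarrow> lzc g c I (f x)) \<Longrightarrow> lzc g c I (\<Sum>x\<in>A. f x)"
  by (induction A rule: finite_induct) (auto intro: lzc_add)

lemma lzc_cancel_c: "lzc g c I (c ^ n * a) \<Longrightarrow> lzc g c I a"
  unfolding lzc_def
proof (elim exE)
  fix N assume "(c * PP g I) ^ N * (c ^ n * a) = 0"
  then have "PP g I ^ n * ((c * PP g I) ^ N * (c ^ n * a)) = 0" by simp
  then have "(c * PP g I) ^ (N + n) * a = 0" by (simp add: power_add power_mult_distrib algebra_simps)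
  then show "\<exists>N. (c * PP g I) ^ N * a = 0" by blast
qed

lemma lzc_cancel_P: "lzc g c I (PP g I ^ n * a) \<Longrightarrow> lzc g c I a"
  unfolding lzc_def
proof (elim exE)
  fix N assume "(c * PP g I) ^ N * (PP g I ^ n * a) = 0"
  then have "c ^ n * ((c * PP g I) ^ N * (PP g I ^ n * a)) = 0" by simp
  then have "(c * PP g I) ^ (N + n) * a = 0" by (simp add: power_add power_mult_distrib algebra_simps)
  then show "\<exists>N. (c * PP g I) ^ N * a = 0" by blast
qed

lemma lzc_uniform:
  assumes "finite F" "\<And>J. J \<in> F \<Longrightarrow> lzc g c J (h J)"
  shows "\<exists>N. \<forall>J\<in>F. (c * PP g J) ^ N * h J = 0"
  using assms
proof (induction F rule: finite_induct)
  case empty then show ?case by auto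
next
  case (insert x F)
  then obtain N where N: "\<forall>J\<in>F. (c * PP g J) ^ N * h J = 0" by auto
  obtain M where M: "(c * PP g x) ^ M * h x = 0" using insert.prems unfolding lzc_def by auto
  have "\<forall>J\<in>insert x F. (c * PP g J) ^ (N + M) * h J = 0"
    using N M pow_zero_mono by (metis insert_iff le_add1 le_add2)
  then show ?case by blast
qed

definition cocyc :: "(nat \<Rightarrow> 'a::comm_ring_1) \<Rightarrow> 'a \<Rightarrow> nat set \<Rightarrow> nat \<Rightarrow> (nat set \<Rightarrow> 'a) \<Rightarrow> nat \<Rightarrow> bool" where
  "cocyc g c S k z t \<longleftrightarrow> (\<forall>J. J \<subseteq> S \<and> card J = Suc k \<longrightarrow> lzc g c J (dd g z t J))"

definition cobd :: "(nat \<Rightarrow> 'a::comm_ring_1) \<Rightarrow> 'a \<Rightarrow> nat set \<Rightarrow> nat \<Rightarrow> (nat set \<Rightarrow> 'a) \<Rightarrow> nat \<Rightarrow> bool" where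
  "cobd g c S k z t \<longleftrightarrow> (\<exists>y u. \<forall>I. I \<subseteq> S \<and> card I = k \<longrightarrow>
      lzc g c I (z I * (c * PP g I) ^ u - dd g y u I * (c * PP g I) ^ t))"

definition comb :: "'b set \<Rightarrow> ('b \<Rightarrow> 'a::comm_ring_1) \<Rightarrow> 'a \<Rightarrow> bool" where
  "comb T h x \<longleftrightarrow> (\<exists>b. x = (\<Sum>j\<in>T. b j * h j))"

lemma comb_add: "comb T h x \<Longrightarrow> comb T h y \<Longrightarrow> comb T h (x + y)"
  unfolding comb_def
proof (elim exE)
  fix b1 b2 assume "x = (\<Sum>j\<in>T. b1 j * h j)" "y = (\<Sum>j\<in>T. b2 j * h j)"
  then have "x + y = (\<Sum>j\<in>T. (b1 j + b2 j) * h j)" by (simp add: sum.distrib distrib_right)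
  then show "\<exists>b. x + y = (\<Sum>j\<in>T. b j * h j)" by (intro exI[of _ "\<lambda>j. b1 j + b2 j"])
qed

lemma comb_mult: "comb T h x \<Longrightarrow> comb T h (r * x)"
  unfolding comb_def
proof (elim exE)
  fix b assume "x = (\<Sum>j\<in>T. b j * h j)"
  then have "r * x = (\<Sum>j\<in>T. (r * b j) * h j)" by (simp add: sum_distrib_left algebra_simps)
  then show "\<exists>b. r * x = (\<Sum>j\<in>T. b j * h j)" by (intro exI[of _ "\<lambda>j. r * b j"])
qed

lemma comb_0: "comb T h 0" unfolding comb_def by (rule exI[of _ "\<lambda>_. 0"]) simp

lemma comb_sum: "finite A \<Longrightarrow> (\<And>x. x \<in> A \<Longrightarrow> comb T h (f x)) \<Longrightarrow> comb T h (\<Sum>x\<in>A. f x)"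
  by (induction A rule: finite_induct) (auto intro: comb_add comb_0)

lemma comb_gen: "finite T \<Longrightarrow> j \<in> T \<Longrightarrow> comb T h (h j)"
  unfolding comb_def
proof -
  assume T: "finite T" "j \<in> T"
  have "(\<Sum>i\<in>T. (if i = j then 1 else 0) * h i) = (\<Sum>i\<in>T. (if i = j then h i else 0))"
    by (rule sum.cong) auto
  also have "\<dots> = h j" using T by (simp add: sum.delta')
  finally have "(\<Sum>i\<in>T. (if i = j then 1 else 0) * h i) = h j" .
  then show "\<exists>b. h j = (\<Sum>i\<in>T. b i * h i)" by metis
qed

lemma comb_mono: "finite T' \<Longrightarrow> T \<subseteq> T' \<Longrightarrow> comb T h x \<Longrightarrow> comb T' h x"
  unfolding comb_def
proof (elim exE)
  fix b assume T: "finite T'" "T \<subseteq> T'" and x: "x = (\<Sum>j\<in>T. b j * h j)"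
  have "(\<Sum>j\<in>T'. (if j \<in> T then b j else 0) * h j) = (\<Sum>j\<in>T'. (if j \<in> T then b j * h j else 0))"
    by (rule sum.cong) auto
  also have "\<dots> = (\<Sum>j\<in>T' \<inter> T. b j * h j)" using T by (simp add: sum.If_cases)
  also have "T' \<inter> T = T" using T by auto
  finally have "(\<Sum>j\<in>T'. (if j \<in> T then b j else 0) * h j) = (\<Sum>j\<in>T. b j * h j)" .
  then show "\<exists>b. x = (\<Sum>j\<in>T'. b j * h j)" using x by metis
qed

lemma pow_comb:
  assumes "finite S"
  shows "\<exists>M. comb S (\<lambda>j. g j ^ E) ((\<Sum>j\<in>S. a j * g j) ^ M)"
  using assms
proof (induction S rule: finite_induct)
  case empty
  show ?case by (rule exI[of _ 1]) (simp add: comb_0)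
next
  case (insert e S)
  then obtain M where M: "comb S (\<lambda>j. g j ^ E) ((\<Sum>j\<in>S. a j * g j) ^ M)" by auto
  define u where "u = a e * g e"
  define v where "v = (\<Sum>j\<in>S. a j * g j)"
  have fin: "finite (insert e S)" using insert by auto
  have Mi: "comb (insert e S) (\<lambda>j. g j ^ E) (v ^ M)"
    using comb_mono[OF fin _ M] v_def by auto
  have ge: "comb (insert e S) (\<lambda>j. g j ^ E) (g e ^ E)" by (rule comb_gen[OF fin]) simp
  have "(u + v) ^ (E + M) = (\<Sum>k\<le>E + M. of_nat ((E + M) choose k) * u ^ k * v ^ (E + M - k))"
    by (rule binomial_ring)
  moreover have "comb (insert e S) (\<lambda>j. g j ^ E) (\<Sum>k\<le>E + M. of_nat ((E + M) choose k) * u ^ k * v ^ (E + M - k))"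
  proof (rule comb_sum)
    fix k assume "k \<in> {..E + M}"
    show "comb (insert e S) (\<lambda>j. g j ^ E) (of_nat ((E + M) choose k) * u ^ k * v ^ (E + M - k))"
    proof (cases "E \<le> k")
      case True
      then obtain d where d: "k = E + d" using le_Suc_ex by blast
      have "of_nat ((E + M) choose k) * u ^ k * v ^ (E + M - k) =
            (of_nat ((E + M) choose k) * a e ^ k * g e ^ d * v ^ (E + M - k)) * g e ^ E"
        unfolding u_def d by (simp add: power_add power_mult_distrib algebra_simps)
      then show ?thesis using comb_mult[OF ge] by metis
    next
      case False
      then have "E + M - k = M + (E - k)" by auto
      then have "of_nat ((E + M) choose k) * u ^ k * v ^ (E + M - k) =
            (of_nat ((E + M) choose k) * u ^ k * v ^ (E - k)) * v ^ M"
        by (simp add: power_add algebra_simps)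
      then show ?thesis using comb_mult[OF Mi] by metis
    qed
  qed simp
  moreover have "(\<Sum>j\<in>insert e S. a j * g j) = u + v" using insert u_def v_def by simp
  ultimately show ?case by metis
qed



lemma homotopy_inner:
  assumes "finite K" "j \<notin> K"
  shows "(\<Sum>i\<in>K. cech_sign K i * cech_sign (insert j K - {i}) j * w (insert j K - {i}) * g i ^ t)
         = w K * g j ^ t - cech_sign (insert j K) j * dd g w t (insert j K)"
proof -
  let ?A = "insert j K"
  have "(\<Sum>i\<in>K. cech_sign K i * cech_sign (insert j K - {i}) j * w (insert j K - {i}) * g i ^ t)
     = (\<Sum>i\<in>K. - cech_sign ?A j * (cech_sign ?A i * w (?A - {i}) * g i ^ t))"
  proof (rule sum.cong[OF refl])
    fix i assume "i \<in> K"
    then have "cech_sign K i * cech_sign (insert j K - {i}) j = - (cech_sign ?A i * cech_sign ?A j :: 'a)"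
      using sign_swap assms by blast
    then show "cech_sign K i * cech_sign (insert j K - {i}) j * w (insert j K - {i}) * g i ^ t
       = - cech_sign ?A j * (cech_sign ?A i * w (?A - {i}) * g i ^ t)"
      by (simp add: algebra_simps)
  qed
  also have "\<dots> = - cech_sign ?A j * (\<Sum>i\<in>K. cech_sign ?A i * w (?A - {i}) * g i ^ t)"
    by (simp add: sum_distrib_left)
  also have "(\<Sum>i\<in>K. cech_sign ?A i * w (?A - {i}) * g i ^ t) = dd g w t ?A - cech_sign ?A j * w K * g j ^ t"
  proof -
    have "dd g w t ?A = cech_sign ?A j * w (?A - {j}) * g j ^ t + (\<Sum>i\<in>K. cech_sign ?A i * w (?A - {i}) * g i ^ t)"
      unfolding dd_def using assms by (simp add: sum.insert)
    moreover have "?A - {j} = K" using assms by auto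
    ultimately show ?thesis by simp
  qed
  finally have e: "(\<Sum>i\<in>K. cech_sign K i * cech_sign (insert j K - {i}) j * w (insert j K - {i}) * g i ^ t)
       = - cech_sign ?A j * (dd g w t ?A - cech_sign ?A j * w K * g j ^ t)" .
  have "- cech_sign ?A j * (dd g w t ?A - cech_sign ?A j * w K * g j ^ t)
      = (cech_sign ?A j * cech_sign ?A j) * (w K * g j ^ t) - cech_sign ?A j * dd g w t ?A"
    by (simp add: algebra_simps)
  then show ?thesis using e by (simp only: sign_sq mult_1)
qed

lemma homotopy_identity:
  fixes g :: "nat \<Rightarrow> 'a::comm_ring_1" and w :: "nat set \<Rightarrow> 'a" and b :: "nat \<Rightarrow> 'a" and N :: nat
  assumes "finite S" "K \<subseteq> S"
  defines "h \<equiv> \<lambda>L. \<Sum>j\<in>S - L. cech_sign (insert j L) j * b j * g j ^ N * w (insert j L)"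
  shows "dd g h t K = (\<Sum>j\<in>S. b j * g j ^ (N + t)) * w K
           - (\<Sum>j\<in>S - K. b j * g j ^ N * (cech_sign (insert j K) j * dd g w t (insert j K)))"
proof -
  have finK: "finite K" using assms finite_subset by blast
  have step: "cech_sign K i * h (K - {i}) * g i ^ t =
      b i * g i ^ (N + t) * w K +
      (\<Sum>j\<in>S - K. b j * g j ^ N * (cech_sign K i * cech_sign (insert j K - {i}) j * w (insert j K - {i}) * g i ^ t))"
    if i: "i \<in> K" for i
  proof -
    have SK: "S - (K - {i}) = insert i (S - K)" using i assms by auto
    have ins: "insert i (K - {i}) = K" using i by auto
    have ins2: "\<And>j. j \<in> S - K \<Longrightarrow> insert j (K - {i}) = insert j K - {i}" using i by auto
    have "h (K - {i}) = (\<Sum>j\<in>insert i (S - K). cech_sign (insert j (K - {i})) j * b j * g j ^ N * w (insert j (K - {i})))"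
      unfolding h_def SK ..
    also have "\<dots> = cech_sign (insert i (K - {i})) i * b i * g i ^ N * w (insert i (K - {i})) +
       (\<Sum>j\<in>S - K. cech_sign (insert j (K - {i})) j * b j * g j ^ N * w (insert j (K - {i})))"
      by (rule sum.insert) (use assms i in auto)
    also have "\<dots> = cech_sign K i * b i * g i ^ N * w K +
       (\<Sum>j\<in>S - K. cech_sign (insert j K - {i}) j * b j * g j ^ N * w (insert j K - {i}))"
      unfolding ins using ins2 by (metis (no_types, lifting) sum.cong)
    finally have "h (K - {i}) = cech_sign K i * b i * g i ^ N * w K +
       (\<Sum>j\<in>S - K. cech_sign (insert j K - {i}) j * b j * g j ^ N * w (insert j K - {i}))" .
    then have "cech_sign K i * h (K - {i}) * g i ^ t =
       (cech_sign K i * cech_sign K i) * b i * g i ^ N * g i ^ t * w K +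
       (\<Sum>j\<in>S - K. cech_sign K i * (cech_sign (insert j K - {i}) j * b j * g j ^ N * w (insert j K - {i})) * g i ^ t)"
      by (simp add: sum_distrib_left sum_distrib_right algebra_simps)
    also have "\<dots> = b i * g i ^ (N + t) * w K +
      (\<Sum>j\<in>S - K. b j * g j ^ N * (cech_sign K i * cech_sign (insert j K - {i}) j * w (insert j K - {i}) * g i ^ t))"
      by (simp add: sign_sq power_add algebra_simps)
    finally show ?thesis .
  qed
  have "dd g h t K = (\<Sum>i\<in>K. cech_sign K i * h (K - {i}) * g i ^ t)" unfolding dd_def by simp
  also have "\<dots> = (\<Sum>i\<in>K. b i * g i ^ (N + t) * w K +
      (\<Sum>j\<in>S - K. b j * g j ^ N * (cech_sign K i * cech_sign (insert j K - {i}) j * w (insert j K - {i}) * g i ^ t)))"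
    using step by (rule sum.cong[OF refl])
  also have "\<dots> = (\<Sum>i\<in>K. b i * g i ^ (N + t)) * w K +
      (\<Sum>j\<in>S - K. b j * g j ^ N * (\<Sum>i\<in>K. cech_sign K i * cech_sign (insert j K - {i}) j * w (insert j K - {i}) * g i ^ t))"
    by (simp add: sum.distrib sum_distrib_right sum_distrib_left sum.swap[of _ K "S - K"])
  also have "\<dots> = (\<Sum>i\<in>K. b i * g i ^ (N + t)) * w K +
      (\<Sum>j\<in>S - K. b j * g j ^ N * (w K * g j ^ t - cech_sign (insert j K) j * dd g w t (insert j K)))"
    by (rule arg_cong2[where f="(+)", OF refl], rule sum.cong[OF refl]) (simp add: homotopy_inner[OF finK])
  also have "\<dots> = (\<Sum>i\<in>K. b i * g i ^ (N + t)) * w K + (\<Sum>j\<in>S - K. b j * g j ^ (N + t)) * w K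
      - (\<Sum>j\<in>S - K. b j * g j ^ N * (cech_sign (insert j K) j * dd g w t (insert j K)))"
  proof -
    have "\<And>j. b j * g j ^ N * (w K * g j ^ t - cech_sign (insert j K) j * dd g w t (insert j K))
      = b j * g j ^ (N + t) * w K - b j * g j ^ N * (cech_sign (insert j K) j * dd g w t (insert j K))"
      by (simp add: power_add algebra_simps)
    then have "(\<Sum>j\<in>S - K. b j * g j ^ N * (w K * g j ^ t - cech_sign (insert j K) j * dd g w t (insert j K)))
      = (\<Sum>j\<in>S - K. b j * g j ^ (N + t)) * w K - (\<Sum>j\<in>S - K. b j * g j ^ N * (cech_sign (insert j K) j * dd g w t (insert j K)))"
      by (simp add: sum_subtractf sum_distrib_right)
    then show ?thesis by simp
  qed
  also have "\<dots> = ((\<Sum>i\<in>K. b i * g i ^ (N + t)) + (\<Sum>j\<in>S - K. b j * g j ^ (N + t))) * w K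
      - (\<Sum>j\<in>S - K. b j * g j ^ N * (cech_sign (insert j K) j * dd g w t (insert j K)))"
    by (simp only: distrib_right)
  also have "(\<Sum>i\<in>K. b i * g i ^ (N + t)) + (\<Sum>j\<in>S - K. b j * g j ^ (N + t)) = (\<Sum>j\<in>S. b j * g j ^ (N + t))"
    using sum.subset_diff[OF assms(2) assms(1), of "\<lambda>j. b j * g j ^ (N + t)"] by (simp only: add.commute)
  finally show ?thesis .
qed



lemma finite_subsets_card: "finite S \<Longrightarrow> finite {J. J \<subseteq> S \<and> card J = k}"
  by (rule finite_subset[of _ "Pow S"]) auto

lemma acyclic:
  fixes g :: "nat \<Rightarrow> 'a::comm_ring_1"
  assumes S: "finite S" and c: "c = (\<Sum>j\<in>S. a j * g j)" and cz: "cocyc g c S k w t"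
  shows "cobd g c S k w t"
proof -
  let ?F = "{J. J \<subseteq> S \<and> card J = Suc k}"
  have "finite ?F" using finite_subsets_card[OF S] .
  moreover have "\<And>J. J \<in> ?F \<Longrightarrow> lzc g c J (dd g w t J)" using cz unfolding cocyc_def by auto
  ultimately obtain N where N: "\<forall>J\<in>?F. (c * PP g J) ^ N * dd g w t J = 0"
    using lzc_uniform[of ?F g c "dd g w t"] by blast
  obtain M where "comb S (\<lambda>j. g j ^ (N + t)) ((\<Sum>j\<in>S. a j * g j) ^ M)"
    using pow_comb[OF S, of g "N+t" a] by blast
  then obtain b where b: "c ^ M = (\<Sum>j\<in>S. b j * g j ^ (N + t))" unfolding comb_def c by blast
  define h where "h \<equiv> \<lambda>L. \<Sum>j\<in>S - L. cech_sign (insert j L) j * b j * g j ^ N * w (insert j L)"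
  define y where "y = (\<lambda>L. h L * PP g L ^ M)"
  have "\<forall>I. I \<subseteq> S \<and> card I = k \<longrightarrow>
      lzc g c I (w I * (c * PP g I) ^ (t + M) - dd g y (t + M) I * (c * PP g I) ^ t)"
  proof (intro allI impI)
    fix I assume I: "I \<subseteq> S \<and> card I = k"
    have finI: "finite I" using I S finite_subset by blast
    define err where "err = (\<Sum>j\<in>S - I. b j * g j ^ N * (cech_sign (insert j I) j * dd g w t (insert j I)))"
    have hI: "dd g h t I = c ^ M * w I - err"
      unfolding h_def err_def b using homotopy_identity[OF S, where K=I and b=b and N=N and w=w and t=t and g=g] I by simp
    have yI: "dd g y (t + M) I = PP g I ^ M * dd g h t I"
      unfolding y_def by (rule dd_raise[OF finI])
    have eq: "w I * (c * PP g I) ^ (t + M) - dd g y (t + M) I * (c * PP g I) ^ t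
        = (c * PP g I) ^ t * PP g I ^ M * err"
      unfolding yI hI by (simp add: power_add power_mult_distrib algebra_simps)
    have "lzc g c I err"
      unfolding err_def
    proof (rule lzc_sum)
      show "finite (S - I)" using S by simp
      fix j assume j: "j \<in> S - I"
      have inF: "insert j I \<in> ?F" using j I finI by auto
      have PPi: "PP g (insert j I) = g j * PP g I" using PP_insert finI j by blast
      have "(c * PP g I) ^ N * (g j ^ N * dd g w t (insert j I)) = (c * PP g (insert j I)) ^ N * dd g w t (insert j I)"
        unfolding PPi by (simp add: power_mult_distrib algebra_simps)
      also have "\<dots> = 0" using N inF by blast
      finally have "lzc g c I (g j ^ N * dd g w t (insert j I))" unfolding lzc_def by blast
      then have "lzc g c I ((b j * cech_sign (insert j I) j) * (g j ^ N * dd g w t (insert j I)))"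
        by (rule lzc_mult)
      then show "lzc g c I (b j * g j ^ N * (cech_sign (insert j I) j * dd g w t (insert j I)))"
        by (simp add: algebra_simps)
    qed
    then show "lzc g c I (w I * (c * PP g I) ^ (t + M) - dd g y (t + M) I * (c * PP g I) ^ t)"
      unfolding eq by (rule lzc_mult)
  qed
  then show ?thesis unfolding cobd_def by blast
qed



definition ext :: "nat \<Rightarrow> (nat set \<Rightarrow> 'a::comm_ring_1) \<Rightarrow> (nat set \<Rightarrow> 'a) \<Rightarrow> nat set \<Rightarrow> 'a" where
  "ext e z w = (\<lambda>I. if e \<in> I then cech_sign I e * w (I - {e}) else z I)"

lemma glue_S: "e \<notin> K \<Longrightarrow> dd g (ext e z w) t K = dd g z t K"
  unfolding ext_def by (rule dd_cong) auto

lemma glue_e: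
  assumes "finite K" "e \<notin> K"
  shows "dd g (ext e z w) t (insert e K) = cech_sign (insert e K) e * (g e ^ t * z K - dd g w t K)"
proof -
  let ?A = "insert e K"
  have "dd g (ext e z w) t ?A = cech_sign ?A e * ext e z w (?A - {e}) * g e ^ t +
      (\<Sum>j\<in>K. cech_sign ?A j * ext e z w (?A - {j}) * g j ^ t)"
    unfolding dd_def using assms by (simp add: sum.insert)
  also have "ext e z w (?A - {e}) = z K" unfolding ext_def using assms by auto
  also have "(\<Sum>j\<in>K. cech_sign ?A j * ext e z w (?A - {j}) * g j ^ t)
      = (\<Sum>j\<in>K. - cech_sign ?A e * (cech_sign K j * w (K - {j}) * g j ^ t))"
  proof (rule sum.cong[OF refl])
    fix j assume j: "j \<in> K"
    have r: "?A - {j} - {e} = K - {j}" using assms by auto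
    have sw: "cech_sign K j * cech_sign (insert e K - {j}) e = - (cech_sign ?A j * cech_sign ?A e :: 'a)"
      using sign_swap[OF assms(1) j assms(2)] .
    have "cech_sign ?A j * cech_sign (?A - {j}) e =
       (cech_sign K j * cech_sign K j) * (cech_sign ?A j * cech_sign (?A - {j}) e :: 'a)"
      by (simp add: sign_sq)
    also have "\<dots> = cech_sign K j * cech_sign ?A j * (cech_sign K j * cech_sign (?A - {j}) e)"
      by (simp add: algebra_simps)
    also have "\<dots> = - cech_sign K j * (cech_sign ?A j * cech_sign ?A j) * cech_sign ?A e"
      using sw by (simp add: algebra_simps)
    also have "\<dots> = - cech_sign K j * cech_sign ?A e" by (simp add: sign_sq)
    finally have ss: "cech_sign ?A j * cech_sign (?A - {j}) e = - cech_sign K j * (cech_sign ?A e :: 'a)" .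
    have "ext e z w (?A - {j}) = cech_sign (?A - {j}) e * w (K - {j})"
      unfolding ext_def using j assms r by auto
    then have "cech_sign ?A j * ext e z w (?A - {j}) * g j ^ t = (cech_sign ?A j * cech_sign (?A - {j}) e) * (w (K - {j}) * g j ^ t)"
      by (simp add: algebra_simps)
    also have "\<dots> = - cech_sign ?A e * (cech_sign K j * w (K - {j}) * g j ^ t)"
      unfolding ss by (simp add: algebra_simps)
    finally show "cech_sign ?A j * ext e z w (?A - {j}) * g j ^ t = - cech_sign ?A e * (cech_sign K j * w (K - {j}) * g j ^ t)" .
  qed
  also have "\<dots> = - cech_sign ?A e * dd g w t K" unfolding dd_def by (simp add: sum_distrib_left)
  finally show ?thesis by (simp add: algebra_simps)
qed

lemma lzc_insert: "finite K \<Longrightarrow> e \<notin> K \<Longrightarrow> lzc g 1 (insert e K) a \<longleftrightarrow> lzc g (g e) K a"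
  unfolding lzc_def by (simp add: PP_insert)

lemma lzc_1_c: "lzc g 1 J a \<Longrightarrow> lzc g c J a"
  unfolding lzc_def
proof (elim exE)
  fix N assume "(1 * PP g J) ^ N * a = 0"
  then have "(c * PP g J) ^ N * a = 0" by (simp add: power_mult_distrib mult.assoc)
  then show "\<exists>N. (c * PP g J) ^ N * a = 0" by blast
qed

lemma cocyc_mono: "cocyc g c T k z t \<Longrightarrow> S \<subseteq> T \<Longrightarrow> cocyc g c S k z t"
  unfolding cocyc_def
proof (intro allI impI)
  fix J assume a: "\<forall>J. J \<subseteq> T \<and> card J = Suc k \<longrightarrow> lzc g c J (dd g z t J)" "S \<subseteq> T" "J \<subseteq> S \<and> card J = Suc k"
  then have "J \<subseteq> T \<and> card J = Suc k" by blast
  then show "lzc g c J (dd g z t J)" using a(1) by blast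
qed

lemma cobd_mono: "cobd g c T k z t \<Longrightarrow> S \<subseteq> T \<Longrightarrow> cobd g c S k z t"
  unfolding cobd_def
proof (elim exE)
  fix y u assume a: "\<forall>I. I \<subseteq> T \<and> card I = k \<longrightarrow> lzc g c I (z I * (c * PP g I) ^ u - dd g y u I * (c * PP g I) ^ t)"
    and ST: "S \<subseteq> T"
  have "\<forall>I. I \<subseteq> S \<and> card I = k \<longrightarrow> lzc g c I (z I * (c * PP g I) ^ u - dd g y u I * (c * PP g I) ^ t)"
  proof (intro allI impI)
    fix I assume "I \<subseteq> S \<and> card I = k"
    then have "I \<subseteq> T \<and> card I = k" using ST by blast
    then show "lzc g c I (z I * (c * PP g I) ^ u - dd g y u I * (c * PP g I) ^ t)" using a by blast
  qed
  then show "\<exists>y u. \<forall>I. I \<subseteq> S \<and> card I = k \<longrightarrow> lzc g c I (z I * (c * PP g I) ^ u - dd g y u I * (c * PP g I) ^ t)"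
    by blast
qed

lemma cobd_cong: "(\<And>I. I \<subseteq> S \<Longrightarrow> z I = z2 I) \<Longrightarrow> cobd g c S k z t \<longleftrightarrow> cobd g c S k z2 t"
proof -
  assume a: "\<And>I. I \<subseteq> S \<Longrightarrow> z I = z2 I"
  have "\<And>y u I. I \<subseteq> S \<and> card I = k \<longrightarrow> lzc g c I (z I * (c * PP g I) ^ u - dd g y u I * (c * PP g I) ^ t)
     \<longleftrightarrow> I \<subseteq> S \<and> card I = k \<longrightarrow> lzc g c I (z2 I * (c * PP g I) ^ u - dd g y u I * (c * PP g I) ^ t)"
    using a by auto
  then show ?thesis unfolding cobd_def by presburger
qed

lemma cobd_raise_back:
  assumes "finite S" "cobd g c S k (\<lambda>I. z I * PP g I ^ d) (t + d)"
  shows "cobd g c S k z t"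
proof -
  obtain y u where yu: "\<forall>I. I \<subseteq> S \<and> card I = k \<longrightarrow>
      lzc g c I (z I * PP g I ^ d * (c * PP g I) ^ u - dd g y u I * (c * PP g I) ^ (t + d))"
    using assms unfolding cobd_def by blast
  have "\<forall>I. I \<subseteq> S \<and> card I = k \<longrightarrow>
      lzc g c I (z I * (c * PP g I) ^ u - dd g (\<lambda>K. c ^ d * y K) u I * (c * PP g I) ^ t)"
  proof (intro allI impI)
    fix I assume I: "I \<subseteq> S \<and> card I = k"
    have "z I * PP g I ^ d * (c * PP g I) ^ u - dd g y u I * (c * PP g I) ^ (t + d)
        = PP g I ^ d * (z I * (c * PP g I) ^ u - dd g (\<lambda>K. c ^ d * y K) u I * (c * PP g I) ^ t)"
      unfolding dd_cmult by (simp add: power_add power_mult_distrib algebra_simps)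
    moreover have "lzc g c I (z I * PP g I ^ d * (c * PP g I) ^ u - dd g y u I * (c * PP g I) ^ (t + d))"
      using yu I by blast
    ultimately show "lzc g c I (z I * (c * PP g I) ^ u - dd g (\<lambda>K. c ^ d * y K) u I * (c * PP g I) ^ t)"
      using lzc_cancel_P by simp
  qed
  then show ?thesis unfolding cobd_def by blast
qed

lemma cocyc_raise:
  assumes "finite S" "cocyc g c S k z t"
  shows "cocyc g c S k (\<lambda>I. z I * PP g I ^ d) (t + d)"
  unfolding cocyc_def
proof (intro allI impI)
  fix J assume J: "J \<subseteq> S \<and> card J = Suc k"
  then have "finite J" using assms finite_subset by blast
  show "lzc g c J (dd g (\<lambda>I. z I * PP g I ^ d) (t + d) J)"
    unfolding dd_raise[OF \<open>finite J\<close>] using assms J unfolding cocyc_def by (simp add: lzc_mult)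
qed



lemma q_pos: "prime CHAR('a::comm_ring_1) \<Longrightarrow> q = CHAR('a) ^ s \<Longrightarrow> q > 0"
  using prime_gt_0_nat by simp

lemma frob_sum: "prime CHAR('a::comm_ring_1) \<Longrightarrow> q = CHAR('a) ^ s \<Longrightarrow> (sum (f :: 'b \<Rightarrow> 'a) A) ^ q = (\<Sum>i\<in>A. f i ^ q)"
  by (rule freshmans_dream_sum')

lemma frob_add: "prime CHAR('a::comm_ring_1) \<Longrightarrow> q = CHAR('a) ^ s \<Longrightarrow> ((a::'a) + b) ^ q = a ^ q + b ^ q"
  by (rule freshmans_dream')

lemma frob_diff:
  assumes "prime CHAR('a::comm_ring_1)" "q = CHAR('a) ^ s"
  shows "((a::'a) - b) ^ q = a ^ q - b ^ q"
proof -
  have "a ^ q = ((a - b) + b) ^ q" by simp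
  also have "\<dots> = (a - b) ^ q + b ^ q" using frob_add[OF assms] .
  finally show ?thesis by (simp add: algebra_simps)
qed

lemma frob_neg1:
  assumes "prime CHAR('a::comm_ring_1)" "q = CHAR('a) ^ s"
  shows "(-1::'a) ^ q = -1"
proof -
  have "(0::'a) = (1 + (-1)) ^ q" using q_pos[OF assms] by (simp add: power_0_left)
  also have "\<dots> = 1 ^ q + (-1) ^ q" by (rule frob_add[OF assms])
  also have "(1::'a) ^ q = 1" by simp
  finally show ?thesis by (simp add: eq_neg_iff_add_eq_0 add.commute)
qed

lemma frob_sign:
  assumes "prime CHAR('a::comm_ring_1)" "q = CHAR('a) ^ s"
  shows "(cech_sign J j :: 'a) ^ q = cech_sign J j"
  unfolding cech_sign_def power_mult[symmetric] mult.commute[of _ q] power_mult frob_neg1[OF assms] ..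

lemma dd_frob:
  assumes "prime CHAR('a::comm_ring_1)" "q = CHAR('a) ^ s"
  shows "dd g (\<lambda>K. (z K :: 'a) ^ q) (t * q) J = dd g z t J ^ q"
  unfolding dd_def frob_sum[OF assms]
  by (rule sum.cong[OF refl]) (simp add: power_mult_distrib frob_sign[OF assms] power_mult[symmetric] mult.commute)

lemma lzc_frob:
  assumes "prime CHAR('a::comm_ring_1)" "q = CHAR('a) ^ s" "lzc g c I (a::'a)"
  shows "lzc g c I (a ^ q)"
proof -
  obtain N where "(c * PP g I) ^ N * a = 0" using assms(3) unfolding lzc_def by blast
  then have "((c * PP g I) ^ N * a) ^ q = 0" using q_pos[OF assms(1,2)] by (simp add: power_0_left)
  then have "(c * PP g I) ^ (N * q) * a ^ q = 0" by (simp add: power_mult_distrib power_mult)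
  then show ?thesis unfolding lzc_def by blast
qed

lemma cocyc_frob:
  assumes "prime CHAR('a::comm_ring_1)" "q = CHAR('a) ^ s" "cocyc g c S k (z :: nat set \<Rightarrow> 'a) t"
  shows "cocyc g c S k (\<lambda>I. z I ^ q) (t * q)"
  unfolding cocyc_def
proof (intro allI impI)
  fix J assume "J \<subseteq> S \<and> card J = Suc k"
  then have "lzc g c J (dd g z t J)" using assms(3) unfolding cocyc_def by blast
  then show "lzc g c J (dd g (\<lambda>I. z I ^ q) (t * q) J)"
    unfolding dd_frob[OF assms(1,2)] by (rule lzc_frob[OF assms(1,2)])
qed

lemma cobd_frob:
  assumes "prime CHAR('a::comm_ring_1)" "q = CHAR('a) ^ s" "cobd g c S k (z :: nat set \<Rightarrow> 'a) t"
  shows "cobd g c S k (\<lambda>I. z I ^ q) (t * q)"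
proof -
  obtain y u where yu: "\<forall>I. I \<subseteq> S \<and> card I = k \<longrightarrow> lzc g c I (z I * (c * PP g I) ^ u - dd g y u I * (c * PP g I) ^ t)"
    using assms(3) unfolding cobd_def by blast
  have "\<forall>I. I \<subseteq> S \<and> card I = k \<longrightarrow> lzc g c I (z I ^ q * (c * PP g I) ^ (u * q) - dd g (\<lambda>K. y K ^ q) (u * q) I * (c * PP g I) ^ (t * q))"
  proof (intro allI impI)
    fix I assume "I \<subseteq> S \<and> card I = k"
    then have "lzc g c I ((z I * (c * PP g I) ^ u - dd g y u I * (c * PP g I) ^ t) ^ q)"
      using yu lzc_frob[OF assms(1,2)] by blast
    then show "lzc g c I (z I ^ q * (c * PP g I) ^ (u * q) - dd g (\<lambda>K. y K ^ q) (u * q) I * (c * PP g I) ^ (t * q))"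
      unfolding frob_diff[OF assms(1,2)] dd_frob[OF assms(1,2)] by (simp add: power_mult_distrib power_mult)
  qed
  then show ?thesis unfolding cobd_def by blast
qed



lemma cocyc_1_c: "cocyc g 1 S k z t \<Longrightarrow> cocyc g c S k z t"
  unfolding cocyc_def
proof (intro allI impI)
  fix J assume "\<forall>J. J \<subseteq> S \<and> card J = Suc k \<longrightarrow> lzc g 1 J (dd g z t J)" "J \<subseteq> S \<and> card J = Suc k"
  then have "lzc g 1 J (dd g z t J)" by blast
  then show "lzc g c J (dd g z t J)" by (rule lzc_1_c)
qed

lemma card_remove_e: "finite J \<Longrightarrow> e \<in> J \<Longrightarrow> card J = Suc k \<Longrightarrow> card (J - {e}) = k"
  by (simp add: card_Diff_singleton)

lemma lift_cocycle:
  fixes g :: "nat \<Rightarrow> 'a::comm_ring_1"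
  assumes S: "finite S" and e: "e \<notin> S" and ge: "g e = (\<Sum>j\<in>S. a j * g j)" and cz: "cocyc g 1 S k z t"
  shows "\<exists>d z'. cocyc g 1 (insert e S) k z' (t + d) \<and> (\<forall>I. e \<notin> I \<longrightarrow> z' I = z I * PP g I ^ d)"
proof -
  have "cocyc g (g e) S k z t" using cz by (rule cocyc_1_c)
  then have "cobd g (g e) S k z t" using acyclic[OF S ge] by blast
  then obtain w u where wu: "\<forall>K. K \<subseteq> S \<and> card K = k \<longrightarrow>
      lzc g (g e) K (z K * (g e * PP g K) ^ u - dd g w u K * (g e * PP g K) ^ t)"
    unfolding cobd_def by blast
  define w' where "w' = (\<lambda>L. g e ^ (t + t) * (w L * PP g L ^ t))"
  define z' where "z' = ext e (\<lambda>I. z I * PP g I ^ u) w'"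
  have "cocyc g 1 (insert e S) k z' (t + u)"
    unfolding cocyc_def
  proof (intro allI impI)
    fix J assume J: "J \<subseteq> insert e S \<and> card J = Suc k"
    have finJ: "finite J" using J S finite_subset by blast
    show "lzc g 1 J (dd g z' (t + u) J)"
    proof (cases "e \<in> J")
      case False
      then have JS: "J \<subseteq> S" using J by blast
      have "dd g z' (t + u) J = dd g (\<lambda>I. z I * PP g I ^ u) (t + u) J"
        unfolding z'_def using glue_S[OF False] .
      also have "\<dots> = PP g J ^ u * dd g z t J" by (rule dd_raise[OF finJ])
      finally have eq: "dd g z' (t + u) J = PP g J ^ u * dd g z t J" .
      have "lzc g 1 J (dd g z t J)" using cz JS J unfolding cocyc_def by blast
      then show ?thesis unfolding eq by (rule lzc_mult)
    next
      case True
      define K where "K = J - {e}"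
      have JK: "J = insert e K" using True K_def by blast
      have eK: "e \<notin> K" using K_def by blast
      have finK: "finite K" using finJ K_def by blast
      have KS: "K \<subseteq> S \<and> card K = k" using J K_def card_remove_e[OF finJ True] by blast
      have d1: "dd g z' (t + u) J = cech_sign J e * (g e ^ (t + u) * (z K * PP g K ^ u) - dd g w' (t + u) K)"
        unfolding z'_def JK by (rule glue_e[OF finK eK])
      have "dd g w' (t + u) K = g e ^ (t + t) * dd g (\<lambda>L. w L * PP g L ^ t) (u + t) K"
        unfolding w'_def dd_cmult by (simp add: add.commute)
      also have "\<dots> = g e ^ (t + t) * (PP g K ^ t * dd g w u K)" unfolding dd_raise[OF finK, where y=w and d=t and u=u and g=g] ..
      finally have d2: "dd g w' (t + u) K = g e ^ (t + t) * (PP g K ^ t * dd g w u K)" .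
      have X: "g e ^ (t + u) * (z K * PP g K ^ u) - g e ^ (t + t) * (PP g K ^ t * dd g w u K)
          = g e ^ t * (z K * (g e * PP g K) ^ u - dd g w u K * (g e * PP g K) ^ t)"
        by (simp add: power_add power_mult_distrib mult_2 algebra_simps)
      have "lzc g (g e) K (z K * (g e * PP g K) ^ u - dd g w u K * (g e * PP g K) ^ t)"
        using wu KS by blast
      then have "lzc g (g e) K (cech_sign J e * (g e ^ t * (z K * (g e * PP g K) ^ u - dd g w u K * (g e * PP g K) ^ t)))"
        by (intro lzc_mult)
      then have "lzc g (g e) K (dd g z' (t + u) J)" unfolding d1 d2 X .
      then show ?thesis unfolding JK using lzc_insert[OF finK eK] unfolding JK[symmetric] by blast
    qed
  qed
  moreover have "\<forall>I. e \<notin> I \<longrightarrow> z' I = z I * PP g I ^ u" unfolding z'_def ext_def by simp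
  ultimately show ?thesis by blast
qed



lemma lower_cobd:
  fixes g :: "nat \<Rightarrow> 'a::comm_ring_1"
  assumes S: "finite S" and e: "e \<notin> S" and ge: "g e = (\<Sum>j\<in>S. a j * g j)"
    and cz: "cocyc g 1 (insert e S) k z t" and cb: "cobd g 1 S k z t"
  shows "cobd g 1 (insert e S) k z t"
proof (cases k)
  case 0
  obtain v u where vu: "\<forall>I. I \<subseteq> S \<and> card I = k \<longrightarrow>
      lzc g 1 I (z I * (1 * PP g I) ^ u - dd g v u I * (1 * PP g I) ^ t)"
    using cb unfolding cobd_def by blast
  have "\<forall>I. I \<subseteq> insert e S \<and> card I = k \<longrightarrow>
      lzc g 1 I (z I * (1 * PP g I) ^ u - dd g v u I * (1 * PP g I) ^ t)"
  proof (intro allI impI)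
    fix I assume I: "I \<subseteq> insert e S \<and> card I = k"
    then have "finite I" using S finite_subset by blast
    then have "I = {}" using I 0 by simp
    then show "lzc g 1 I (z I * (1 * PP g I) ^ u - dd g v u I * (1 * PP g I) ^ t)"
      using vu[rule_format, of "{}"] 0 by simp
  qed
  then show ?thesis unfolding cobd_def by blast
next
  case (Suc k')
  obtain v u where vu: "\<forall>I. I \<subseteq> S \<and> card I = k \<longrightarrow>
      lzc g 1 I (z I * (1 * PP g I) ^ u - dd g v u I * (1 * PP g I) ^ t)"
    using cb unfolding cobd_def by blast
  define w where "w = (\<lambda>K. cech_sign (insert e K) e * z (insert e K))"
  have zpt: "ext e z w I = z I" for I
  proof (cases "e \<in> I")
    case True
    then have "insert e (I - {e}) = I" by blast
    then show ?thesis unfolding ext_def w_def using True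
      by (simp add: mult.assoc[symmetric] sign_sq)
  qed (simp add: ext_def)
  define W where "W = (\<lambda>L. w L * PP g L ^ u - g e ^ t * (v L * PP g L ^ t))"
  have "cocyc g (g e) S k' W (t + u)"
    unfolding cocyc_def
  proof (intro allI impI)
    fix K assume K: "K \<subseteq> S \<and> card K = Suc k'"
    have finK: "finite K" using K S finite_subset by blast
    have eK: "e \<notin> K" using K e by blast
    have dW: "dd g W (t + u) K = PP g K ^ u * dd g w t K - g e ^ t * (PP g K ^ t * dd g v u K)"
    proof -
      have "dd g W (t + u) K = dd g (\<lambda>L. w L * PP g L ^ u) (t + u) K - g e ^ t * dd g (\<lambda>L. v L * PP g L ^ t) (u + t) K"
        unfolding W_def dd_diff dd_cmult by (simp add: add.commute)
      also have "\<dots> = PP g K ^ u * dd g w t K - g e ^ t * (PP g K ^ t * dd g v u K)"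
        unfolding dd_raise[OF finK, where y=w and d=u and u=t and g=g]
          dd_raise[OF finK, where y=v and d=t and u=u and g=g] ..
      finally show ?thesis .
    qed
    have "insert e K \<subseteq> insert e S \<and> card (insert e K) = Suc k"
      using K finK eK Suc by (simp add: subset_insertI2)
    then have "lzc g 1 (insert e K) (dd g z t (insert e K))" using cz unfolding cocyc_def by blast
    moreover have "dd g z t (insert e K) = dd g (ext e z w) t (insert e K)"
      by (rule dd_cong) (simp add: zpt)
    ultimately have "lzc g 1 (insert e K) (cech_sign (insert e K) e * (g e ^ t * z K - dd g w t K))"
      unfolding glue_e[OF finK eK] by simp
    then have "lzc g (g e) K (cech_sign (insert e K) e * (g e ^ t * z K - dd g w t K))"
      using lzc_insert[OF finK eK] by blast
    then have "lzc g (g e) K (cech_sign (insert e K) e * (cech_sign (insert e K) e * (g e ^ t * z K - dd g w t K)))"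
      by (rule lzc_mult)
    then have E1: "lzc g (g e) K (g e ^ t * z K - dd g w t K)"
      by (simp add: mult.assoc[symmetric] sign_sq)
    have "lzc g 1 K (z K * (1 * PP g K) ^ u - dd g v u K * (1 * PP g K) ^ t)" using vu K Suc by blast
    then have E2: "lzc g (g e) K (z K * PP g K ^ u - dd g v u K * PP g K ^ t)"
      using lzc_1_c by simp
    have "PP g K ^ u * dd g w t K - g e ^ t * (PP g K ^ t * dd g v u K)
        = (- (PP g K ^ u)) * (g e ^ t * z K - dd g w t K) + g e ^ t * (z K * PP g K ^ u - dd g v u K * PP g K ^ t)"
      by (simp add: algebra_simps)
    moreover have "lzc g (g e) K ((- (PP g K ^ u)) * (g e ^ t * z K - dd g w t K) + g e ^ t * (z K * PP g K ^ u - dd g v u K * PP g K ^ t))"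
      using E1 E2 by (intro lzc_add lzc_mult)
    ultimately show "lzc g (g e) K (dd g W (t + u) K)" unfolding dW by simp
  qed
  then have "cobd g (g e) S k' W (t + u)" using acyclic[OF S ge] by blast
  then obtain U u2 where Uu: "\<forall>L. L \<subseteq> S \<and> card L = k' \<longrightarrow>
      lzc g (g e) L (W L * (g e * PP g L) ^ u2 - dd g U u2 L * (g e * PP g L) ^ (t + u))"
    unfolding cobd_def by blast
  define Ye where "Ye = (\<lambda>M. - (g e ^ (u + u) * (U M * PP g M ^ u)))"
  define Y where "Y = ext e (\<lambda>I. v I * PP g I ^ u2) Ye"
  have "\<forall>I. I \<subseteq> insert e S \<and> card I = k \<longrightarrow>
      lzc g 1 I (z I * (1 * PP g I) ^ (u + u2) - dd g Y (u + u2) I * (1 * PP g I) ^ t)"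
  proof (intro allI impI)
    fix I assume I: "I \<subseteq> insert e S \<and> card I = k"
    have finI: "finite I" using I S finite_subset by blast
    show "lzc g 1 I (z I * (1 * PP g I) ^ (u + u2) - dd g Y (u + u2) I * (1 * PP g I) ^ t)"
    proof (cases "e \<in> I")
      case False
      then have IS: "I \<subseteq> S" using I by blast
      have "dd g Y (u + u2) I = PP g I ^ u2 * dd g v u I"
        unfolding Y_def glue_S[OF False] by (rule dd_raise[OF finI])
      then have eq: "z I * (1 * PP g I) ^ (u + u2) - dd g Y (u + u2) I * (1 * PP g I) ^ t
          = PP g I ^ u2 * (z I * (1 * PP g I) ^ u - dd g v u I * (1 * PP g I) ^ t)"
        by (simp add: power_add algebra_simps)
      have "lzc g 1 I (z I * (1 * PP g I) ^ u - dd g v u I * (1 * PP g I) ^ t)" using vu IS I by blast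
      then show ?thesis unfolding eq by (rule lzc_mult)
    next
      case True
      define K where "K = I - {e}"
      have IK: "I = insert e K" using True K_def by blast
      have eK: "e \<notin> K" using K_def by blast
      have finK: "finite K" using finI K_def by blast
      have KS: "K \<subseteq> S \<and> card K = k'" using I K_def card_remove_e[OF finI True] Suc by auto
      have PI: "PP g I = g e * PP g K" unfolding IK using PP_insert[OF finK eK] .
      have zI: "z I = cech_sign I e * w K"
        using zpt[of I] True unfolding ext_def K_def by simp
      have dY: "dd g Y (u + u2) I = cech_sign I e * (g e ^ (u + u2) * (v K * PP g K ^ u2) - dd g Ye (u + u2) K)"
        unfolding Y_def IK by (rule glue_e[OF finK eK])
      have dYe: "dd g Ye (u + u2) K = - (g e ^ (u + u) * (PP g K ^ u * dd g U u2 K))"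
      proof -
        have "dd g Ye (u + u2) K = - (g e ^ (u + u) * dd g (\<lambda>M. U M * PP g M ^ u) (u2 + u) K)"
          unfolding Ye_def using dd_cmult[of g "- (g e ^ (u + u))" "\<lambda>M. U M * PP g M ^ u"]
          by (simp add: add.commute)
        also have "\<dots> = - (g e ^ (u + u) * (PP g K ^ u * dd g U u2 K))"
          unfolding dd_raise[OF finK, where y=U and d=u and u=u2 and g=g] ..
        finally show ?thesis .
      qed
      have X: "z I * (1 * PP g I) ^ (u + u2) - dd g Y (u + u2) I * (1 * PP g I) ^ t
          = cech_sign I e * g e ^ u * (W K * (g e * PP g K) ^ u2 - dd g U u2 K * (g e * PP g K) ^ (t + u))"
        unfolding dY dYe zI PI W_def by (simp add: power_add power_mult_distrib algebra_simps)
      have "lzc g (g e) K (W K * (g e * PP g K) ^ u2 - dd g U u2 K * (g e * PP g K) ^ (t + u))"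
        using Uu KS by blast
      then have "lzc g (g e) K (cech_sign I e * g e ^ u * (W K * (g e * PP g K) ^ u2 - dd g U u2 K * (g e * PP g K) ^ (t + u)))"
        by (rule lzc_mult)
      then have "lzc g 1 (insert e K) (cech_sign I e * g e ^ u * (W K * (g e * PP g K) ^ u2 - dd g U u2 K * (g e * PP g K) ^ (t + u)))"
        using lzc_insert[OF finK eK] by blast
      then show ?thesis unfolding X IK[symmetric] .
    qed
  qed
  then show ?thesis unfolding cobd_def by blast
qed

definition frobnz :: "(nat \<Rightarrow> 'a::comm_ring_1) \<Rightarrow> nat set \<Rightarrow> nat \<Rightarrow> nat \<Rightarrow> bool" where
  "frobnz g S q k \<longleftrightarrow> (\<exists>z t. cocyc g 1 S k z t \<and> \<not> cobd g 1 S k (\<lambda>I. z I ^ q) (t * q))"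

lemma add_equiv:
  fixes g :: "nat \<Rightarrow> 'a::comm_ring_1"
  assumes S: "finite S" and e: "e \<notin> S" and ge: "g e = (\<Sum>j\<in>S. a j * g j)"
    and p: "prime CHAR('a)" and q: "q = CHAR('a) ^ s"
  shows "frobnz g (insert e S) q k \<longleftrightarrow> frobnz g S q k"
proof
  assume "frobnz g (insert e S) q k"
  then obtain z t where cz: "cocyc g 1 (insert e S) k z t" and ncb: "\<not> cobd g 1 (insert e S) k (\<lambda>I. z I ^ q) (t * q)"
    unfolding frobnz_def by blast
  have "cocyc g 1 S k z t" using cocyc_mono[OF cz] by blast
  moreover have "\<not> cobd g 1 S k (\<lambda>I. z I ^ q) (t * q)"
  proof
    assume "cobd g 1 S k (\<lambda>I. z I ^ q) (t * q)"
    moreover have "cocyc g 1 (insert e S) k (\<lambda>I. z I ^ q) (t * q)" by (rule cocyc_frob[OF p q cz])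
    ultimately have "cobd g 1 (insert e S) k (\<lambda>I. z I ^ q) (t * q)"
      using lower_cobd[OF S e ge] by blast
    then show False using ncb by blast
  qed
  ultimately show "frobnz g S q k" unfolding frobnz_def by blast
next
  assume "frobnz g S q k"
  then obtain z t where cz: "cocyc g 1 S k z t" and ncb: "\<not> cobd g 1 S k (\<lambda>I. z I ^ q) (t * q)"
    unfolding frobnz_def by blast
  obtain d z' where cz': "cocyc g 1 (insert e S) k z' (t + d)" and zz: "\<forall>I. e \<notin> I \<longrightarrow> z' I = z I * PP g I ^ d"
    using lift_cocycle[OF S e ge cz] by blast
  have "\<not> cobd g 1 (insert e S) k (\<lambda>I. z' I ^ q) ((t + d) * q)"
  proof
    assume "cobd g 1 (insert e S) k (\<lambda>I. z' I ^ q) ((t + d) * q)"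
    then have "cobd g 1 S k (\<lambda>I. z' I ^ q) ((t + d) * q)" by (rule cobd_mono) blast
    moreover have "\<And>I. I \<subseteq> S \<Longrightarrow> z' I ^ q = z I ^ q * PP g I ^ (d * q)"
      using zz e by (auto simp: power_mult_distrib power_mult[symmetric] mult.commute)
    ultimately have "cobd g 1 S k (\<lambda>I. z I ^ q * PP g I ^ (d * q)) (t * q + d * q)"
      using cobd_cong[of S "\<lambda>I. z' I ^ q" "\<lambda>I. z I ^ q * PP g I ^ (d * q)"] by (simp add: add_mult_distrib)
    then have "cobd g 1 S k (\<lambda>I. z I ^ q) (t * q)" by (rule cobd_raise_back[OF S])
    then show False using ncb by blast
  qed
  then show "frobnz g (insert e S) q k" using cz' unfolding frobnz_def by blast
qed



lemma PP_xprod: "xprod xs I = PP (nth xs) I" unfolding xprod_def PP_def ..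
lemma dd_cech: "cech_d xs = dd (nth xs)" unfolding cech_d_def[abs_def] dd_def[abs_def] ..
lemma loc_lzc: "loc_zero xs I a \<longleftrightarrow> lzc (nth xs) 1 I a" unfolding loc_zero_def lzc_def PP_xprod by simp

lemma cocycle_bridge: "cech_cocycle xs k z t \<longleftrightarrow> cocyc (nth xs) 1 {..<length xs} k z t"
  unfolding cech_cocycle_def cocyc_def loc_lzc dd_cech ..

lemma cobd_zero: "finite S \<Longrightarrow> cobd g 1 S 0 z t \<longleftrightarrow> lzc g 1 {} (z {})"
proof
  assume S: "finite S"
  assume "cobd g 1 S 0 z t"
  then obtain y u where "\<forall>I. I \<subseteq> S \<and> card I = 0 \<longrightarrow> lzc g 1 I (z I * (1 * PP g I) ^ u - dd g y u I * (1 * PP g I) ^ t)"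
    unfolding cobd_def by blast
  then have "lzc g 1 {} (z {} * (1 * PP g {}) ^ u - dd g y u {} * (1 * PP g {}) ^ t)"
    by (rule allE[where x="{}"]) simp
  then show "lzc g 1 {} (z {})" by (simp add: PP_def)
next
  assume S: "finite S" and z: "lzc g 1 {} (z {})"
  have "\<forall>I. I \<subseteq> S \<and> card I = 0 \<longrightarrow> lzc g 1 I (z I * (1 * PP g I) ^ 0 - dd g (\<lambda>_. 0) 0 I * (1 * PP g I) ^ t)"
  proof (intro allI impI)
    fix I assume I: "I \<subseteq> S \<and> card I = 0"
    then have "I = {}" using S finite_subset by (metis card_0_eq)
    then show "lzc g 1 I (z I * (1 * PP g I) ^ 0 - dd g (\<lambda>_. 0) 0 I * (1 * PP g I) ^ t)" using z by simp
  qed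
  then show "cobd g 1 S 0 z t" unfolding cobd_def by blast
qed

lemma coboundary_bridge: "cech_coboundary xs k z t \<longleftrightarrow> cobd (nth xs) 1 {..<length xs} k z t"
proof (cases "k = 0")
  case True
  have "cech_coboundary xs k z t \<longleftrightarrow> lzc (nth xs) 1 {} (z {})"
  proof
    assume "cech_coboundary xs k z t"
    then have "\<forall>I. I \<subseteq> {..<length xs} \<and> card I = 0 \<longrightarrow> loc_zero xs I (z I)"
      unfolding cech_coboundary_def using True by simp
    then show "lzc (nth xs) 1 {} (z {})" unfolding loc_lzc by (rule allE[where x="{}"]) simp
  next
    assume z: "lzc (nth xs) 1 {} (z {})"
    have "\<forall>I. I \<subseteq> {..<length xs} \<and> card I = 0 \<longrightarrow> loc_zero xs I (z I)"
    proof (intro allI impI)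
      fix I assume I: "I \<subseteq> {..<length xs} \<and> card I = 0"
      then have "I = {}" by (metis card_0_eq finite_lessThan finite_subset)
      then show "loc_zero xs I (z I)" unfolding loc_lzc using z by simp
    qed
    then show "cech_coboundary xs k z t" unfolding cech_coboundary_def using True by simp
  qed
  then show ?thesis using cobd_zero[of "{..<length xs}" "nth xs" z t] True by simp
next
  case False
  then show ?thesis unfolding cech_coboundary_def cobd_def loc_lzc dd_cech PP_xprod by simp
qed

lemma frob_bridge: "frob_nonzero_on xs i s \<longleftrightarrow> frobnz (nth xs) {..<length xs} (CHAR('a) ^ s) i"
  for xs :: "'a::comm_ring_1 list"
  unfolding frob_nonzero_on_def frobnz_def cocycle_bridge coboundary_bridge ..

lemma PP_cong: "(\<And>i. i \<in> I \<Longrightarrow> g i = g' i) \<Longrightarrow> PP g I = PP g' I"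
  unfolding PP_def by (rule prod.cong) auto

lemma dd_gcong: "(\<And>i. i \<in> I \<Longrightarrow> g i = g' i) \<Longrightarrow> dd g z t I = dd g' z t I"
  unfolding dd_def by (rule sum.cong) auto

lemma lzc_gcong: "(\<And>i. i \<in> I \<Longrightarrow> g i = g' i) \<Longrightarrow> lzc g c I a \<longleftrightarrow> lzc g' c I a"
  unfolding lzc_def using PP_cong[of I g g'] by simp

lemma cocyc_gcong: "(\<And>i. i \<in> S \<Longrightarrow> g i = g' i) \<Longrightarrow> cocyc g c S k z t \<longleftrightarrow> cocyc g' c S k z t"
proof -
  assume a: "\<And>i. i \<in> S \<Longrightarrow> g i = g' i"
  have h: "lzc g c J (dd g z t J) = lzc g' c J (dd g' z t J)" if "J \<subseteq> S" for J
    using a that lzc_gcong[of J g g'] dd_gcong[of J g g'] by (metis subsetD)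
  show ?thesis unfolding cocyc_def
  proof (intro iffI allI impI)
    fix J assume A: "\<forall>J. J \<subseteq> S \<and> card J = Suc k \<longrightarrow> lzc g c J (dd g z t J)" and J: "J \<subseteq> S \<and> card J = Suc k"
    have "lzc g c J (dd g z t J)" using A[rule_format, OF J] .
    then show "lzc g' c J (dd g' z t J)" using h J by simp
  next
    fix J assume A: "\<forall>J. J \<subseteq> S \<and> card J = Suc k \<longrightarrow> lzc g' c J (dd g' z t J)" and J: "J \<subseteq> S \<and> card J = Suc k"
    have "lzc g' c J (dd g' z t J)" using A[rule_format, OF J] .
    then show "lzc g c J (dd g z t J)" using h J by simp
  qed
qed

lemma cobd_gcong: "(\<And>i. i \<in> S \<Longrightarrow> g i = g' i) \<Longrightarrow> cobd g c S k z t \<longleftrightarrow> cobd g' c S k z t"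
proof -
  assume a: "\<And>i. i \<in> S \<Longrightarrow> g i = g' i"
  have h: "lzc g c I (z I * (c * PP g I) ^ u - dd g y u I * (c * PP g I) ^ t)
     = lzc g' c I (z I * (c * PP g' I) ^ u - dd g' y u I * (c * PP g' I) ^ t)" if "I \<subseteq> S" for I y u
  proof -
    have "\<And>i. i \<in> I \<Longrightarrow> g i = g' i" using a that by blast
    then show ?thesis using lzc_gcong[of I g g'] dd_gcong[of I g g'] PP_cong[of I g g'] by simp
  qed
  show ?thesis unfolding cobd_def
  proof (intro iffI; elim exE)
    fix y u assume A: "\<forall>I. I \<subseteq> S \<and> card I = k \<longrightarrow> lzc g c I (z I * (c * PP g I) ^ u - dd g y u I * (c * PP g I) ^ t)"
    have "\<forall>I. I \<subseteq> S \<and> card I = k \<longrightarrow> lzc g' c I (z I * (c * PP g' I) ^ u - dd g' y u I * (c * PP g' I) ^ t)"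
    proof (intro allI impI)
      fix I assume I: "I \<subseteq> S \<and> card I = k"
      show "lzc g' c I (z I * (c * PP g' I) ^ u - dd g' y u I * (c * PP g' I) ^ t)"
        using A[rule_format, OF I] h[where I=I and y=y and u=u] I by simp
    qed
    then show "\<exists>y u. \<forall>I. I \<subseteq> S \<and> card I = k \<longrightarrow> lzc g' c I (z I * (c * PP g' I) ^ u - dd g' y u I * (c * PP g' I) ^ t)"
      by blast
  next
    fix y u assume A: "\<forall>I. I \<subseteq> S \<and> card I = k \<longrightarrow> lzc g' c I (z I * (c * PP g' I) ^ u - dd g' y u I * (c * PP g' I) ^ t)"
    have "\<forall>I. I \<subseteq> S \<and> card I = k \<longrightarrow> lzc g c I (z I * (c * PP g I) ^ u - dd g y u I * (c * PP g I) ^ t)"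
    proof (intro allI impI)
      fix I assume I: "I \<subseteq> S \<and> card I = k"
      show "lzc g c I (z I * (c * PP g I) ^ u - dd g y u I * (c * PP g I) ^ t)"
        using A[rule_format, OF I] h[where I=I and y=y and u=u] I by simp
    qed
    then show "\<exists>y u. \<forall>I. I \<subseteq> S \<and> card I = k \<longrightarrow> lzc g c I (z I * (c * PP g I) ^ u - dd g y u I * (c * PP g I) ^ t)"
      by blast
  qed
qed

lemma frobnz_gcong: "(\<And>i. i \<in> S \<Longrightarrow> g i = g' i) \<Longrightarrow> frobnz g S q k \<longleftrightarrow> frobnz g' S q k"
  unfolding frobnz_def using cocyc_gcong[of S g g'] cobd_gcong[of S g g'] by presburger

section \<open>Adding a finite set of redundant generators\<close>

lemma add_many:
  fixes g :: "nat \<Rightarrow> 'a::comm_ring_1"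
  assumes S: "finite S" and E: "finite E" and dis: "S \<inter> E = {}"
    and gens: "\<And>e. e \<in> E \<Longrightarrow> comb S g (g e)"
    and p: "prime CHAR('a)" and q: "q = CHAR('a) ^ s"
  shows "frobnz g (S \<union> E) q k \<longleftrightarrow> frobnz g S q k"
  using E dis gens
proof (induction E rule: finite_induct)
  case empty
  then show ?case by simp
next
  case (insert e E)
  have fin: "finite (S \<union> E)" using S insert by simp
  have eSE: "e \<notin> S \<union> E" using insert by blast
  have "comb S g (g e)" using insert by blast
  then have "comb (S \<union> E) g (g e)" using comb_mono[OF fin] by blast
  then obtain a where ge: "g e = (\<Sum>j\<in>S \<union> E. a j * g j)" unfolding comb_def by blast
  have "frobnz g (S \<union> insert e E) q k \<longleftrightarrow> frobnz g (insert e (S \<union> E)) q k" by simp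
  also have "\<dots> \<longleftrightarrow> frobnz g (S \<union> E) q k" by (rule add_equiv[OF fin eSE ge p q])
  also have "\<dots> \<longleftrightarrow> frobnz g S q k" using insert by blast
  finally show ?case .
qed



definition sh :: "nat \<Rightarrow> nat set \<Rightarrow> nat set" where "sh n I = (\<lambda>i. i + n) ` I"
definition unsh :: "nat \<Rightarrow> nat set \<Rightarrow> nat set" where "unsh n I = (\<lambda>i. i - n) ` I"

lemma inj_shift: "inj_on (\<lambda>i::nat. i + n) A" by (rule inj_onI) simp

lemma card_sh: "card (sh n I) = card I" unfolding sh_def by (rule card_image[OF inj_shift])

lemma unsh_sh: "unsh n (sh n I) = I" unfolding sh_def unsh_def by (force simp: image_image)

lemma sh_unsh: "(\<And>i. i \<in> J \<Longrightarrow> n \<le> i) \<Longrightarrow> sh n (unsh n J) = J"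
  unfolding sh_def unsh_def image_image by (force intro: image_eqI)

lemma PP_sh: "PP g (sh n I) = PP (\<lambda>i. g (i + n)) I"
  unfolding PP_def sh_def by (simp add: prod.reindex[OF inj_shift])

lemma sign_sh: "cech_sign (sh n I) (j + n) = cech_sign I j"
proof -
  have "{j'\<in>sh n I. j' < j + n} = sh n {j'\<in>I. j' < j}" unfolding sh_def by auto
  then show ?thesis unfolding cech_sign_def by (simp add: card_sh)
qed

lemma sh_remove: "sh n I - {j + n} = sh n (I - {j})" unfolding sh_def by auto

lemma dd_sh: "dd g z t (sh n I) = dd (\<lambda>i. g (i + n)) (\<lambda>K. z (sh n K)) t I"
proof -
  have "dd g z t (sh n I) = (\<Sum>j\<in>I. cech_sign (sh n I) (j + n) * z (sh n I - {j + n}) * g (j + n) ^ t)"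
    unfolding dd_def sh_def by (simp add: sum.reindex[OF inj_shift])
  also have "\<dots> = dd (\<lambda>i. g (i + n)) (\<lambda>K. z (sh n K)) t I"
    unfolding dd_def sign_sh sh_remove ..
  finally show ?thesis .
qed

lemma lzc_sh: "lzc g c (sh n I) a \<longleftrightarrow> lzc (\<lambda>i. g (i + n)) c I a"
  unfolding lzc_def PP_sh ..

lemma subset_sh: "J \<subseteq> sh n S \<Longrightarrow> J = sh n (unsh n J) \<and> unsh n J \<subseteq> S"
proof -
  assume J: "J \<subseteq> sh n S"
  have "\<And>i. i \<in> J \<Longrightarrow> n \<le> i" using J unfolding sh_def by auto
  then have e: "sh n (unsh n J) = J" by (rule sh_unsh)
  moreover have "unsh n J \<subseteq> S"
  proof -
    have "unsh n J \<subseteq> unsh n (sh n S)" using J unfolding unsh_def by blast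
    then show ?thesis using unsh_sh by metis
  qed
  ultimately show ?thesis by simp
qed

lemma sh_mono: "I \<subseteq> S \<Longrightarrow> sh n I \<subseteq> sh n S" unfolding sh_def by blast

lemma cocyc_sh: "cocyc g c (sh n S) k z t \<longleftrightarrow> cocyc (\<lambda>i. g (i + n)) c S k (\<lambda>K. z (sh n K)) t"
  unfolding cocyc_def
proof (intro iffI allI impI)
  fix I assume A: "\<forall>J. J \<subseteq> sh n S \<and> card J = Suc k \<longrightarrow> lzc g c J (dd g z t J)" and I: "I \<subseteq> S \<and> card I = Suc k"
  have "sh n I \<subseteq> sh n S \<and> card (sh n I) = Suc k" using I sh_mono card_sh by metis
  then have "lzc g c (sh n I) (dd g z t (sh n I))" using A by blast
  then show "lzc (\<lambda>i. g (i + n)) c I (dd (\<lambda>i. g (i + n)) (\<lambda>K. z (sh n K)) t I)"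
    unfolding lzc_sh dd_sh .
next
  fix J assume A: "\<forall>I. I \<subseteq> S \<and> card I = Suc k \<longrightarrow> lzc (\<lambda>i. g (i + n)) c I (dd (\<lambda>i. g (i + n)) (\<lambda>K. z (sh n K)) t I)"
    and J: "J \<subseteq> sh n S \<and> card J = Suc k"
  have e: "J = sh n (unsh n J)" and s: "unsh n J \<subseteq> S" using subset_sh J by blast+
  have "card (unsh n J) = Suc k" using J e card_sh by metis
  then have "lzc (\<lambda>i. g (i + n)) c (unsh n J) (dd (\<lambda>i. g (i + n)) (\<lambda>K. z (sh n K)) t (unsh n J))" using A s by blast
  then have "lzc g c (sh n (unsh n J)) (dd g z t (sh n (unsh n J)))" unfolding lzc_sh dd_sh .
  then show "lzc g c J (dd g z t J)" using e by simp
qed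

lemma cobd_sh: "cobd g c (sh n S) k z t \<longleftrightarrow> cobd (\<lambda>i. g (i + n)) c S k (\<lambda>K. z (sh n K)) t"
  unfolding cobd_def
proof (intro iffI; elim exE)
  fix y u assume A: "\<forall>I. I \<subseteq> sh n S \<and> card I = k \<longrightarrow> lzc g c I (z I * (c * PP g I) ^ u - dd g y u I * (c * PP g I) ^ t)"
  have "\<forall>I. I \<subseteq> S \<and> card I = k \<longrightarrow> lzc (\<lambda>i. g (i + n)) c I (z (sh n I) * (c * PP (\<lambda>i. g (i + n)) I) ^ u
        - dd (\<lambda>i. g (i + n)) (\<lambda>K. y (sh n K)) u I * (c * PP (\<lambda>i. g (i + n)) I) ^ t)"
  proof (intro allI impI)
    fix I assume I: "I \<subseteq> S \<and> card I = k"
    have "sh n I \<subseteq> sh n S \<and> card (sh n I) = k" using I sh_mono card_sh by metis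
    then have "lzc g c (sh n I) (z (sh n I) * (c * PP g (sh n I)) ^ u - dd g y u (sh n I) * (c * PP g (sh n I)) ^ t)"
      using A by blast
    then show "lzc (\<lambda>i. g (i + n)) c I (z (sh n I) * (c * PP (\<lambda>i. g (i + n)) I) ^ u
        - dd (\<lambda>i. g (i + n)) (\<lambda>K. y (sh n K)) u I * (c * PP (\<lambda>i. g (i + n)) I) ^ t)"
      unfolding lzc_sh dd_sh PP_sh .
  qed
  then show "\<exists>y u. \<forall>I. I \<subseteq> S \<and> card I = k \<longrightarrow> lzc (\<lambda>i. g (i + n)) c I (z (sh n I) * (c * PP (\<lambda>i. g (i + n)) I) ^ u
        - dd (\<lambda>i. g (i + n)) y u I * (c * PP (\<lambda>i. g (i + n)) I) ^ t)" by blast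
next
  fix y u assume A: "\<forall>I. I \<subseteq> S \<and> card I = k \<longrightarrow> lzc (\<lambda>i. g (i + n)) c I (z (sh n I) * (c * PP (\<lambda>i. g (i + n)) I) ^ u
        - dd (\<lambda>i. g (i + n)) y u I * (c * PP (\<lambda>i. g (i + n)) I) ^ t)"
  have yy: "(\<lambda>K. y (unsh n (sh n K))) = y" by (simp add: unsh_sh)
  have "\<forall>J. J \<subseteq> sh n S \<and> card J = k \<longrightarrow> lzc g c J (z J * (c * PP g J) ^ u - dd g (\<lambda>K. y (unsh n K)) u J * (c * PP g J) ^ t)"
  proof (intro allI impI)
    fix J assume J: "J \<subseteq> sh n S \<and> card J = k"
    have e: "J = sh n (unsh n J)" and s: "unsh n J \<subseteq> S" using subset_sh J by blast+
    have "card (unsh n J) = k" using J e card_sh by metis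
    then have "lzc (\<lambda>i. g (i + n)) c (unsh n J) (z (sh n (unsh n J)) * (c * PP (\<lambda>i. g (i + n)) (unsh n J)) ^ u
        - dd (\<lambda>i. g (i + n)) y u (unsh n J) * (c * PP (\<lambda>i. g (i + n)) (unsh n J)) ^ t)" using A s by blast
    then have "lzc g c (sh n (unsh n J)) (z (sh n (unsh n J)) * (c * PP g (sh n (unsh n J))) ^ u
        - dd g (\<lambda>K. y (unsh n K)) u (sh n (unsh n J)) * (c * PP g (sh n (unsh n J))) ^ t)"
      unfolding lzc_sh dd_sh PP_sh yy .
    then show "lzc g c J (z J * (c * PP g J) ^ u - dd g (\<lambda>K. y (unsh n K)) u J * (c * PP g J) ^ t)"
      using e by simp
  qed
  then show "\<exists>y u. \<forall>J. J \<subseteq> sh n S \<and> card J = k \<longrightarrow> lzc g c J (z J * (c * PP g J) ^ u - dd g y u J * (c * PP g J) ^ t)"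
    by blast
qed

lemma frobnz_sh: "frobnz g (sh n S) q k \<longleftrightarrow> frobnz (\<lambda>i. g (i + n)) S q k"
  unfolding frobnz_def
proof (intro iffI; elim exE conjE)
  fix z t assume "cocyc g 1 (sh n S) k z t" "\<not> cobd g 1 (sh n S) k (\<lambda>I. z I ^ q) (t * q)"
  then have "cocyc (\<lambda>i. g (i + n)) 1 S k (\<lambda>K. z (sh n K)) t \<and> \<not> cobd (\<lambda>i. g (i + n)) 1 S k (\<lambda>K. z (sh n K) ^ q) (t * q)"
    unfolding cocyc_sh cobd_sh by simp
  then show "\<exists>z t. cocyc (\<lambda>i. g (i + n)) 1 S k z t \<and> \<not> cobd (\<lambda>i. g (i + n)) 1 S k (\<lambda>I. z I ^ q) (t * q)" by blast
next
  fix z t assume "cocyc (\<lambda>i. g (i + n)) 1 S k z t" "\<not> cobd (\<lambda>i. g (i + n)) 1 S k (\<lambda>I. z I ^ q) (t * q)"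
  then have "cocyc (\<lambda>i. g (i + n)) 1 S k (\<lambda>K. z (unsh n (sh n K))) t \<and> \<not> cobd (\<lambda>i. g (i + n)) 1 S k (\<lambda>K. z (unsh n (sh n K)) ^ q) (t * q)"
    by (simp add: unsh_sh)
  then have "cocyc g 1 (sh n S) k (\<lambda>K. z (unsh n K)) t \<and> \<not> cobd g 1 (sh n S) k (\<lambda>K. z (unsh n K) ^ q) (t * q)"
    unfolding cocyc_sh cobd_sh .
  then show "\<exists>z t. cocyc g 1 (sh n S) k z t \<and> \<not> cobd g 1 (sh n S) k (\<lambda>I. z I ^ q) (t * q)" by blast
qed



lemma comb_trans:
  assumes "finite T" "comb T h x" "\<And>j. j \<in> T \<Longrightarrow> comb T' h' (h j)"
  shows "comb T' h' x"
proof -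
  obtain b where x: "x = (\<Sum>j\<in>T. b j * h j)" using assms(2) unfolding comb_def by blast
  show ?thesis unfolding x by (rule comb_sum[OF assms(1)]) (rule comb_mult, rule assms(3))
qed

lemma ideal_gen_comb:
  assumes "x \<in> ideal_gen (set xs)"
  shows "comb {..<length xs} (nth xs) x"
proof -
  obtain n :: nat and r s where rs: "\<forall>i<n. s i \<in> set xs" "x = (\<Sum>i<n. r i * s i)"
    using assms unfolding ideal_gen_def mem_Collect_eq by (elim exE conjE) blast
  show ?thesis unfolding rs(2)
  proof (rule comb_sum)
    fix i assume "i \<in> {..<n}"
    then have "s i \<in> set xs" using rs by blast
    then obtain j where j: "j < length xs" "s i = xs ! j" by (metis in_set_conv_nth)
    have "comb {..<length xs} (nth xs) (xs ! j)" using j by (intro comb_gen) auto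
    then show "comb {..<length xs} (nth xs) (r i * s i)" unfolding j(2) by (rule comb_mult)
  qed simp
qed

lemma in_ideal_gen: "x \<in> S \<Longrightarrow> x \<in> ideal_gen S"
  unfolding ideal_gen_def
  by (rule CollectI, rule exI[of _ 1], rule exI[of _ "\<lambda>_. 1"], rule exI[of _ "\<lambda>_. x"]) simp

lemma indep:
  fixes xs ys :: "'a::comm_ring_1 list"
  assumes eq: "ideal_gen (set xs) = ideal_gen (set ys)"
    and p: "prime CHAR('a)" and q: "q = CHAR('a) ^ s"
  shows "frobnz (nth xs) {..<length xs} q k \<longleftrightarrow> frobnz (nth ys) {..<length ys} q k"
proof -
  define n where "n = length xs"
  define m where "m = length ys"
  define g where "g = nth (xs @ ys)"
  have gx: "\<And>i. i \<in> {..<n} \<Longrightarrow> g i = xs ! i" unfolding g_def n_def by (simp add: nth_append)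
  have gy: "\<And>i. i \<in> {..<m} \<Longrightarrow> g (i + n) = ys ! i" unfolding g_def n_def by (simp add: nth_append)
  have dis1: "{..<n} \<inter> {n..<n+m} = {}" by auto
  have un1: "{..<n} \<union> {n..<n+m} = {..<n+m}" by auto
  have dis2: "{n..<n+m} \<inter> {..<n} = {}" by auto
  have un2: "{n..<n+m} \<union> {..<n} = {..<n+m}" by auto
  have shm: "sh n {..<m} = {n..<n+m}"
  proof -
    have "(\<lambda>i. i + n) ` {..<m} = {n..<n+m}"
      by (metis add.commute atLeast0LessThan image_add_atLeastLessThan' plus_nat.add_0)
    then show ?thesis unfolding sh_def .
  qed
  have gens1: "comb {..<n} g (g e)" if "e \<in> {n..<n+m}" for e
  proof -
    have "e - n < m" "e - n + n = e" using that by auto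
    then have "g e = ys ! (e - n)" using gy[of "e - n"] by simp
    moreover have "ys ! (e - n) \<in> set ys" using \<open>e - n < m\<close> m_def by simp
    then have "ys ! (e - n) \<in> ideal_gen (set xs)" using eq in_ideal_gen by blast
    then have "comb {..<length xs} (nth xs) (ys ! (e - n))" by (rule ideal_gen_comb)
    moreover have "comb {..<n} g (xs ! j)" if "j \<in> {..<length xs}" for j
      using comb_gen[of "{..<n}" j g] gx[of j] that n_def by simp
    ultimately show ?thesis using comb_trans[of "{..<length xs}" "nth xs" _ "{..<n}" g] by simp
  qed
  have gens2: "comb {n..<n+m} g (g e)" if "e \<in> {..<n}" for e
  proof -
    have "g e = xs ! e" using gx that by simp
    moreover have "xs ! e \<in> set xs" using that n_def by simp
    then have "xs ! e \<in> ideal_gen (set ys)" using eq in_ideal_gen by blast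
    then have "comb {..<length ys} (nth ys) (xs ! e)" by (rule ideal_gen_comb)
    moreover have "comb {n..<n+m} g (ys ! j)" if "j \<in> {..<length ys}" for j
      using comb_gen[of "{n..<n+m}" "j + n" g] gy[of j] that m_def by simp
    ultimately show ?thesis using comb_trans[of "{..<length ys}" "nth ys" _ "{n..<n+m}" g] by simp
  qed
  have "frobnz (nth xs) {..<length xs} q k \<longleftrightarrow> frobnz g {..<n} q k"
    unfolding n_def[symmetric] using frobnz_gcong[of "{..<n}" g "nth xs"] gx by simp
  also have "\<dots> \<longleftrightarrow> frobnz g {..<n+m} q k"
    using add_many[of "{..<n}" "{n..<n+m}" g, OF _ _ dis1 gens1 p q] un1 by simp
  also have "\<dots> \<longleftrightarrow> frobnz g {n..<n+m} q k"
    using add_many[of "{n..<n+m}" "{..<n}" g, OF _ _ dis2 gens2 p q] un2 by simp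
  also have "\<dots> \<longleftrightarrow> frobnz (\<lambda>i. g (i + n)) {..<m} q k"
    unfolding shm[symmetric] by (rule frobnz_sh)
  also have "\<dots> \<longleftrightarrow> frobnz (nth ys) {..<length ys} q k"
    unfolding m_def[symmetric] using frobnz_gcong[of "{..<m}" "\<lambda>i. g (i + n)" "nth ys"] gy by simp
  finally show ?thesis .
qed



lemma hom_0: "ring_homomorphism f \<Longrightarrow> f 0 = 0"
proof -
  assume h: "ring_homomorphism f"
  have "f (0 + 0) = f 0 + f 0" using h unfolding ring_homomorphism_def by blast
  then show ?thesis by simp
qed

lemma hom_add: "ring_homomorphism f \<Longrightarrow> f (a + b) = f a + f b"
  unfolding ring_homomorphism_def by blast

lemma hom_mult: "ring_homomorphism f \<Longrightarrow> f (a * b) = f a * f b"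
  unfolding ring_homomorphism_def by blast

lemma hom_1: "ring_homomorphism f \<Longrightarrow> f 1 = 1"
  unfolding ring_homomorphism_def by blast

lemma hom_neg: "ring_homomorphism f \<Longrightarrow> f (- a) = - f a"
proof -
  assume h: "ring_homomorphism f"
  have "f (a + - a) = f a + f (- a)" using hom_add[OF h] .
  then have "0 = f a + f (- a)" using hom_0[OF h] by simp
  then show ?thesis by (simp add: eq_neg_iff_add_eq_0 add.commute)
qed

lemma hom_diff: "ring_homomorphism f \<Longrightarrow> f (a - b) = f a - f b"
  using hom_add[of f a "- b"] hom_neg[of f b] by simp

lemma hom_sum: "ring_homomorphism f \<Longrightarrow> f (\<Sum>i\<in>A. g i) = (\<Sum>i\<in>A. f (g i))"
  by (induction A rule: infinite_finite_induct) (simp_all add: hom_0 hom_add)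

lemma hom_power: "ring_homomorphism f \<Longrightarrow> f (a ^ n) = f a ^ n"
  by (induction n) (simp_all add: hom_1 hom_mult)

lemma hom_prod: "ring_homomorphism f \<Longrightarrow> f (\<Prod>i\<in>A. g i) = (\<Prod>i\<in>A. f (g i))"
  by (induction A rule: infinite_finite_induct) (simp_all add: hom_1 hom_mult)

lemma hom_sign: "ring_homomorphism f \<Longrightarrow> f (cech_sign J j) = cech_sign J j"
  unfolding cech_sign_def by (simp add: hom_power hom_neg hom_1)

lemma flat_single:
  fixes f :: "'a::comm_ring_1 \<Rightarrow> 'b::comm_ring_1" and C :: "'c set" and a :: "'c \<Rightarrow> 'a" and w :: "'c \<Rightarrow> 'b"
  assumes fl: "flat_hom f" and C: "finite C" and rel: "(\<Sum>c\<in>C. f (a c) * w c) = 0"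
  shows "\<exists>(k::nat) v y. (\<forall>c\<in>C. w c = (\<Sum>j<k. f (v c j) * y j)) \<and> (\<forall>j<k. (\<Sum>c\<in>C. a c * v c j) = 0)"
proof -
  define n where "n = card C"
  obtain h where h: "bij_betw h {..<n} C"
    using ex_bij_betw_nat_finite[OF C] unfolding n_def atLeast0LessThan by blast
  have "(\<Sum>i<n. f (a (h i)) * w (h i)) = (\<Sum>c\<in>C. f (a c) * w c)"
    using sum.reindex_bij_betw[OF h, of "\<lambda>c. f (a c) * w c"] .
  then have "(\<Sum>i<n. f (a (h i)) * w (h i)) = 0" using rel by simp
  then obtain k :: nat and cc yy where kc: "\<forall>i<n. w (h i) = (\<Sum>j<k. f (cc i j) * yy j)"
      and kc2: "\<forall>j<k. (\<Sum>i<n. a (h i) * cc i j) = 0"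
    using fl[unfolded flat_hom_def, rule_format, where n=n and a="\<lambda>i. a (h i)" and b="\<lambda>i. w (h i)"] by blast
  define hi where "hi = inv_into {..<n} h"
  have hhi: "\<And>c. c \<in> C \<Longrightarrow> h (hi c) = c \<and> hi c < n"
    using h unfolding hi_def bij_betw_def by (metis f_inv_into_f inv_into_into lessThan_iff)
  have hih: "\<And>i. i < n \<Longrightarrow> hi (h i) = i"
    using h unfolding hi_def bij_betw_def by (simp add: inv_into_f_f)
  define v where "v = (\<lambda>c j. cc (hi c) j)"
  have "\<forall>c\<in>C. w c = (\<Sum>j<k. f (v c j) * yy j)"
  proof
    fix c assume "c \<in> C"
    then have "h (hi c) = c" "hi c < n" using hhi by auto
    then show "w c = (\<Sum>j<k. f (v c j) * yy j)" using kc unfolding v_def by metis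
  qed
  moreover have "\<forall>j<k. (\<Sum>c\<in>C. a c * v c j) = 0"
  proof (intro allI impI)
    fix j assume j: "j < k"
    have "(\<Sum>c\<in>C. a c * v c j) = (\<Sum>i<n. a (h i) * v (h i) j)"
      using sum.reindex_bij_betw[OF h, of "\<lambda>c. a c * v c j"] by simp
    also have "\<dots> = (\<Sum>i<n. a (h i) * cc i j)" unfolding v_def by (rule sum.cong) (simp_all add: hih)
    also have "\<dots> = 0" using kc2 j by blast
    finally show "(\<Sum>c\<in>C. a c * v c j) = 0" .
  qed
  ultimately show ?thesis by blast
qed

lemma flat_kernel:
  fixes f :: "'a::comm_ring_1 \<Rightarrow> 'b::comm_ring_1" and C :: "'c set" and R :: "'r set"
    and L :: "'r \<Rightarrow> 'c \<Rightarrow> 'a" and w :: "'c \<Rightarrow> 'b"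
  assumes hom: "ring_homomorphism f" and fl: "flat_hom f" and C: "finite C" and R: "finite R"
    and rel: "\<forall>r\<in>R. (\<Sum>c\<in>C. f (L r c) * w c) = 0"
  shows "\<exists>(k::nat) v y. (\<forall>c\<in>C. w c = (\<Sum>j<k. f (v c j) * y j)) \<and> (\<forall>j<k. \<forall>r\<in>R. (\<Sum>c\<in>C. L r c * v c j) = 0)"
  using R rel
proof (induction R rule: finite_induct)
  case empty
  have "(\<Sum>c\<in>C. f ((\<lambda>_. 0) c) * w c) = 0" using hom_0[OF hom] by simp
  then obtain k :: nat and v y where "\<forall>c\<in>C. w c = (\<Sum>j<k. f (v c j) * y j)"
    using flat_single[OF fl C, of "\<lambda>_. 0" w] by blast
  then show ?case by blast
next
  case (insert r R)
  then obtain k :: nat and v y where kv: "\<forall>c\<in>C. w c = (\<Sum>j<k. f (v c j) * y j)"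
      and kv2: "\<forall>j<k. \<forall>r\<in>R. (\<Sum>c\<in>C. L r c * v c j) = 0"
    by blast
  define a where "a = (\<lambda>j. \<Sum>c\<in>C. L r c * v c j)"
  have "0 = (\<Sum>c\<in>C. f (L r c) * w c)" using insert by simp
  also have "\<dots> = (\<Sum>c\<in>C. f (L r c) * (\<Sum>j<k. f (v c j) * y j))"
    by (rule sum.cong) (simp_all add: kv)
  also have "\<dots> = (\<Sum>j<k. f (a j) * y j)"
    unfolding a_def hom_sum[OF hom] hom_mult[OF hom]
    by (simp add: sum_distrib_left sum_distrib_right sum.swap[of _ C] algebra_simps)
  finally have "(\<Sum>j\<in>{..<k}. f (a j) * y j) = 0" by simp
  then obtain k2 :: nat and v2 y2 where k2: "\<forall>j\<in>{..<k}. y j = (\<Sum>l<k2. f (v2 j l) * y2 l)"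
      and k22: "\<forall>l<k2. (\<Sum>j\<in>{..<k}. a j * v2 j l) = 0"
    using flat_single[OF fl, of "{..<k}" a y] by blast
  define V where "V = (\<lambda>c l. \<Sum>j<k. v c j * v2 j l)"
  have "\<forall>c\<in>C. w c = (\<Sum>l<k2. f (V c l) * y2 l)"
  proof
    fix c assume c: "c \<in> C"
    have "w c = (\<Sum>j<k. f (v c j) * (\<Sum>l<k2. f (v2 j l) * y2 l))"
      using kv c k2 by simp
    also have "\<dots> = (\<Sum>l<k2. f (V c l) * y2 l)"
      unfolding V_def hom_sum[OF hom] hom_mult[OF hom]
      by (simp add: sum_distrib_left sum_distrib_right sum.swap[of _ "{..<k}"] algebra_simps)
    finally show "w c = (\<Sum>l<k2. f (V c l) * y2 l)" .
  qed
  moreover have "\<forall>l<k2. \<forall>r'\<in>insert r R. (\<Sum>c\<in>C. L r' c * V c l) = 0"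
  proof (intro allI impI ballI)
    fix l r' assume l: "l < k2" and r': "r' \<in> insert r R"
    have e: "(\<Sum>c\<in>C. L r' c * V c l) = (\<Sum>j<k. (\<Sum>c\<in>C. L r' c * v c j) * v2 j l)"
      unfolding V_def by (simp add: sum_distrib_left sum_distrib_right sum.swap[of _ C] algebra_simps)
    show "(\<Sum>c\<in>C. L r' c * V c l) = 0"
    proof (cases "r' = r")
      case True
      then show ?thesis unfolding e using k22 l a_def by simp
    next
      case False
      then have "r' \<in> R" using r' by blast
      then show ?thesis unfolding e using kv2 by simp
    qed
  qed
  ultimately show ?case by blast
qed



lemma ideal_sum: "is_ideal J \<Longrightarrow> (\<And>i. i \<in> A \<Longrightarrow> f i \<in> J) \<Longrightarrow> (\<Sum>i\<in>A. f i) \<in> J"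
proof (induction A rule: infinite_finite_induct)
  case (infinite A) then show ?case unfolding is_ideal_def by simp
next
  case empty then show ?case unfolding is_ideal_def by simp
next
  case (insert x F) then show ?case unfolding is_ideal_def by simp
qed

lemma ideal_mult: "is_ideal J \<Longrightarrow> a \<in> J \<Longrightarrow> r * a \<in> J"
  unfolding is_ideal_def by blast

lemma ideal_add: "is_ideal J \<Longrightarrow> a \<in> J \<Longrightarrow> b \<in> J \<Longrightarrow> a + b \<in> J"
  unfolding is_ideal_def by blast

lemma ideal_gen_least: "is_ideal J \<Longrightarrow> X \<subseteq> J \<Longrightarrow> ideal_gen X \<subseteq> J"
proof
  fix x assume J: "is_ideal J" "X \<subseteq> J" and "x \<in> ideal_gen X"
  then obtain n :: nat and r s where rs: "\<forall>i<n. s i \<in> X" "x = (\<Sum>i<n. r i * s i)"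
    unfolding ideal_gen_def mem_Collect_eq by (elim exE conjE) blast
  show "x \<in> J" unfolding rs(2)
    by (rule ideal_sum[OF J(1)]) (use rs J in \<open>auto intro: ideal_mult\<close>)
qed

lemma ideal_gen_mono: "X \<subseteq> Y \<Longrightarrow> ideal_gen X \<subseteq> ideal_gen Y"
  unfolding ideal_gen_def by blast

lemma is_ideal_gen: "is_ideal (ideal_gen X)"
  unfolding is_ideal_def
proof (intro conjI ballI allI)
  show "0 \<in> ideal_gen X" unfolding ideal_gen_def
    by (rule CollectI, rule exI[of _ 0]) simp
next
  fix a b assume "a \<in> ideal_gen X" "b \<in> ideal_gen X"
  then obtain n1 :: nat and r1 and s1 and n2 :: nat and r2 and s2 where
      rs1: "\<forall>i<n1. s1 i \<in> X" "a = (\<Sum>i<n1. r1 i * s1 i)" and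
      rs2: "\<forall>i<n2. s2 i \<in> X" "b = (\<Sum>i<n2. r2 i * s2 i)"
    unfolding ideal_gen_def mem_Collect_eq by (elim exE conjE) blast
  define r where "r = (\<lambda>i. if i < n1 then r1 i else r2 (i - n1))"
  define s where "s = (\<lambda>i. if i < n1 then s1 i else s2 (i - n1))"
  have "(\<Sum>i<n1 + n2. r i * s i) = (\<Sum>i\<in>{0..<n1}. r i * s i) + (\<Sum>i\<in>{n1..<n1 + n2}. r i * s i)"
    unfolding atLeast0LessThan[symmetric] by (rule sum.atLeastLessThan_concat[symmetric]) auto
  also have "(\<Sum>i\<in>{0..<n1}. r i * s i) = a" unfolding rs1(2) r_def s_def atLeast0LessThan by simp
  also have "(\<Sum>i\<in>{n1..<n1 + n2}. r i * s i) = (\<Sum>i\<in>{0..<n2}. r (i + n1) * s (i + n1))"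
    using sum.shift_bounds_nat_ivl[of "\<lambda>i. r i * s i" 0 n1 n2] by (simp add: add.commute)
  also have "\<dots> = b" unfolding rs2(2) r_def s_def atLeast0LessThan by simp
  finally have "a + b = (\<Sum>i<n1 + n2. r i * s i)" by simp
  moreover have "\<forall>i<n1 + n2. s i \<in> X" unfolding s_def using rs1 rs2 by auto
  ultimately show "a + b \<in> ideal_gen X" unfolding ideal_gen_def mem_Collect_eq
    by (intro exI[of _ "n1 + n2"] exI[of _ r] exI[of _ s]) simp
next
  fix r a assume "a \<in> ideal_gen X"
  then obtain n :: nat and rr s where rs: "\<forall>i<n. s i \<in> X" "a = (\<Sum>i<n. rr i * s i)"
    unfolding ideal_gen_def mem_Collect_eq by (elim exE conjE) blast
  have "r * a = (\<Sum>i<n. (r * rr i) * s i)" unfolding rs(2) by (simp add: sum_distrib_left algebra_simps)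
  then show "r * a \<in> ideal_gen X" unfolding ideal_gen_def mem_Collect_eq using rs(1)
    by (intro exI[of _ n] exI[of _ "\<lambda>i. r * rr i"] exI[of _ s]) simp
qed

lemma ideal_gen_hom:
  assumes hom: "ring_homomorphism f"
  shows "ideal_gen (f ` ideal_gen T) = ideal_gen (f ` T)"
proof
  show "ideal_gen (f ` T) \<subseteq> ideal_gen (f ` ideal_gen T)"
    by (rule ideal_gen_mono) (use in_ideal_gen in blast)
  show "ideal_gen (f ` ideal_gen T) \<subseteq> ideal_gen (f ` T)"
  proof (rule ideal_gen_least[OF is_ideal_gen])
    show "f ` ideal_gen T \<subseteq> ideal_gen (f ` T)"
    proof
      fix y assume "y \<in> f ` ideal_gen T"
      then obtain x where x: "x \<in> ideal_gen T" "y = f x" by blast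
      then obtain n :: nat and r s where rs: "\<forall>i<n. s i \<in> T" "x = (\<Sum>i<n. r i * s i)"
        unfolding ideal_gen_def mem_Collect_eq by (elim exE conjE) blast
      have "y = (\<Sum>i<n. f (r i) * f (s i))" unfolding x(2) rs(2) hom_sum[OF hom] hom_mult[OF hom] ..
      also have "\<dots> \<in> ideal_gen (f ` T)"
      proof (rule ideal_sum[OF is_ideal_gen])
        fix i assume "i \<in> {..<n}"
        then have "f (s i) \<in> ideal_gen (f ` T)" using rs by (intro in_ideal_gen) auto
        then show "f (r i) * f (s i) \<in> ideal_gen (f ` T)" by (rule ideal_mult[OF is_ideal_gen])
      qed
      finally show "y \<in> ideal_gen (f ` T)" .
    qed
  qed
qed

lemma proper_in_maximal:
  fixes I :: "'a::comm_ring_1 set"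
  assumes I: "is_ideal I" "1 \<notin> I"
  shows "\<exists>M. maximal_ideal M \<and> I \<subseteq> M"
proof -
  define A where "A = {J. is_ideal J \<and> I \<subseteq> J \<and> (1::'a) \<notin> J}"
  have "\<forall>C\<in>chains A. \<exists>U\<in>A. \<forall>X\<in>C. X \<subseteq> U"
  proof
    fix C assume C: "C \<in> chains A"
    show "\<exists>U\<in>A. \<forall>X\<in>C. X \<subseteq> U"
    proof (cases "C = {}")
      case True
      then show ?thesis using I unfolding A_def by blast
    next
      case False
      then obtain X0 where X0: "X0 \<in> C" by blast
      have CA: "C \<subseteq> A" using C unfolding chains_def by blast
      have "is_ideal (\<Union>C)" unfolding is_ideal_def
      proof (intro conjI ballI allI)
        show "0 \<in> \<Union>C" using X0 CA unfolding A_def is_ideal_def by blast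
      next
        fix r a assume "a \<in> \<Union>C"
        then obtain X where "X \<in> C" "a \<in> X" by blast
        then show "r * a \<in> \<Union>C" using CA unfolding A_def is_ideal_def by blast
      next
        fix a b assume "a \<in> \<Union>C" "b \<in> \<Union>C"
        then obtain X Y where XY: "X \<in> C" "a \<in> X" "Y \<in> C" "b \<in> Y" by blast
        then have "X \<subseteq> Y \<or> Y \<subseteq> X" using chainsD[OF C] by blast
        then show "a + b \<in> \<Union>C"
        proof
          assume "X \<subseteq> Y"
          then have "a + b \<in> Y" using XY CA unfolding A_def is_ideal_def by blast
          then show ?thesis using XY by blast
        next
          assume "Y \<subseteq> X"
          then have "a + b \<in> X" using XY CA unfolding A_def is_ideal_def by blast
          then show ?thesis using XY by blast
        qed
      qed
      moreover have "I \<subseteq> \<Union>C" using X0 CA unfolding A_def by blast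
      moreover have "1 \<notin> \<Union>C" using CA unfolding A_def by blast
      ultimately have "\<Union>C \<in> A" unfolding A_def by blast
      then show ?thesis by blast
    qed
  qed
  then obtain M where M: "M \<in> A" "\<forall>X\<in>A. M \<subseteq> X \<longrightarrow> X = M" using Zorn_Lemma2 by blast
  have "maximal_ideal M" unfolding maximal_ideal_def
  proof (intro conjI allI impI)
    show "is_ideal M" "1 \<notin> M" using M unfolding A_def by auto
    fix J assume J: "is_ideal J \<and> M \<subseteq> J \<and> 1 \<notin> J"
    then have "J \<in> A" using M unfolding A_def by blast
    then show "J = M" using M J by blast
  qed
  then show ?thesis using M unfolding A_def by blast
qed

lemma proper_in_local:
  assumes "local_ring_max mt" "is_ideal I" "1 \<notin> I"
  shows "I \<subseteq> mt"
  using proper_in_maximal[OF assms(2,3)] assms(1) unfolding local_ring_max_def by blast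



lemma ff_image:
  fixes f :: "'a::comm_ring_1 \<Rightarrow> 'b::comm_ring_1" and C :: "'c set" and R :: "'r set"
    and L :: "'r \<Rightarrow> 'c \<Rightarrow> 'a" and v :: "'r \<Rightarrow> 'a" and w :: "'c \<Rightarrow> 'b"
  assumes hom: "ring_homomorphism f" and fl: "flat_hom f" and lmt: "local_ring_max mt"
    and loc: "\<forall>a\<in>mt. f a \<in> m" and mI: "is_ideal m" and m1: "1 \<notin> m"
    and C: "finite C" and R: "finite R"
    and sol: "\<forall>r\<in>R. (\<Sum>c\<in>C. f (L r c) * w c) = f (v r)"
  shows "\<exists>w'. \<forall>r\<in>R. (\<Sum>c\<in>C. L r c * w' c) = v r"
proof -
  define C' where "C' = insert None (Some ` C)"
  define L' where "L' = (\<lambda>r co. case co of None \<Rightarrow> - v r | Some c \<Rightarrow> L r c)"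
  define W where "W = (\<lambda>co. case co of None \<Rightarrow> 1 | Some c \<Rightarrow> w c)"
  have finC': "finite C'" unfolding C'_def using C by simp
  have sumC': "(\<Sum>co\<in>C'. h co) = h None + (\<Sum>c\<in>C. h (Some c))" for h :: "'c option \<Rightarrow> 'x::comm_monoid_add"
  proof -
    have "(\<Sum>co\<in>C'. h co) = h None + (\<Sum>co\<in>Some ` C. h co)" unfolding C'_def using C by (simp add: sum.insert)
    also have "(\<Sum>co\<in>Some ` C. h co) = (\<Sum>c\<in>C. h (Some c))" by (simp add: sum.reindex)
    finally show ?thesis .
  qed
  have "\<forall>r\<in>R. (\<Sum>co\<in>C'. f (L' r co) * W co) = 0"
  proof
    fix r assume r: "r \<in> R"
    have "(\<Sum>co\<in>C'. f (L' r co) * W co) = f (- v r) * 1 + (\<Sum>c\<in>C. f (L r c) * w c)"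
      unfolding sumC' L'_def W_def by simp
    also have "\<dots> = 0" using sol r hom_neg[OF hom] by simp
    finally show "(\<Sum>co\<in>C'. f (L' r co) * W co) = 0" .
  qed
  then obtain k :: nat and V y where kV: "\<forall>co\<in>C'. W co = (\<Sum>j<k. f (V co j) * y j)"
      and kV2: "\<forall>j<k. \<forall>r\<in>R. (\<Sum>co\<in>C'. L' r co * V co j) = 0"
    using flat_kernel[OF hom fl finC' R, of L' W] by blast
  define I where "I = {a. \<exists>w'. \<forall>r\<in>R. (\<Sum>c\<in>C. L r c * w' c) = a * v r}"
  have isI: "is_ideal I" unfolding is_ideal_def
  proof (intro conjI ballI allI)
    show "0 \<in> I" unfolding I_def by (rule CollectI, rule exI[of _ "\<lambda>_. 0"]) simp
  next
    fix a b assume "a \<in> I" "b \<in> I"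
    then obtain wa wb where "\<forall>r\<in>R. (\<Sum>c\<in>C. L r c * wa c) = a * v r" "\<forall>r\<in>R. (\<Sum>c\<in>C. L r c * wb c) = b * v r"
      unfolding I_def by blast
    then have "\<forall>r\<in>R. (\<Sum>c\<in>C. L r c * (wa c + wb c)) = (a + b) * v r"
      by (simp add: distrib_left sum.distrib distrib_right)
    then show "a + b \<in> I" unfolding I_def mem_Collect_eq by (intro exI[of _ "\<lambda>c. wa c + wb c"])
  next
    fix r a assume "a \<in> I"
    then obtain wa where "\<forall>r\<in>R. (\<Sum>c\<in>C. L r c * wa c) = a * v r" unfolding I_def by blast
    then have "\<forall>rr\<in>R. (\<Sum>c\<in>C. L rr c * (r * wa c)) = (r * a) * v rr"
    proof (intro ballI)
      fix rr assume A: "\<forall>r\<in>R. (\<Sum>c\<in>C. L r c * wa c) = a * v r" and rr: "rr \<in> R"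
      have "(\<Sum>c\<in>C. L rr c * (r * wa c)) = r * (\<Sum>c\<in>C. L rr c * wa c)"
        by (simp add: sum_distrib_left algebra_simps)
      also have "\<dots> = (r * a) * v rr" using A rr by (simp add: algebra_simps)
      finally show "(\<Sum>c\<in>C. L rr c * (r * wa c)) = (r * a) * v rr" .
    qed
    then show "r * a \<in> I" unfolding I_def mem_Collect_eq by (intro exI[of _ "\<lambda>c. r * wa c"])
  qed
  have VI: "V None j \<in> I" if j: "j < k" for j
  proof -
    have "\<forall>r\<in>R. (\<Sum>c\<in>C. L r c * V (Some c) j) = V None j * v r"
    proof
      fix r assume r: "r \<in> R"
      have "0 = (\<Sum>co\<in>C'. L' r co * V co j)" using kV2 j r by simp
      also have "\<dots> = - v r * V None j + (\<Sum>c\<in>C. L r c * V (Some c) j)" unfolding sumC' L'_def by simp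
      finally show "(\<Sum>c\<in>C. L r c * V (Some c) j) = V None j * v r"
        by (simp add: algebra_simps eq_neg_iff_add_eq_0 add.commute)
    qed
    then show ?thesis unfolding I_def mem_Collect_eq by (intro exI[of _ "\<lambda>c. V (Some c) j"])
  qed
  have "1 \<in> I"
  proof (rule ccontr)
    assume "1 \<notin> I"
    then have "I \<subseteq> mt" using proper_in_local[OF lmt isI] by blast
    then have fm: "\<And>j. j < k \<Longrightarrow> f (V None j) \<in> m" using VI loc by blast
    have "1 = W None" unfolding W_def by simp
    also have "\<dots> = (\<Sum>j<k. f (V None j) * y j)" using kV unfolding C'_def by simp
    also have "\<dots> \<in> m"
    proof (rule ideal_sum[OF mI])
      fix j assume "j \<in> {..<k}"
      then have "y j * f (V None j) \<in> m" using fm ideal_mult[OF mI] by simp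
      then show "f (V None j) * y j \<in> m" by (simp add: mult.commute)
    qed
    finally show False using m1 by simp
  qed
  then show ?thesis unfolding I_def by simp
qed



lemma PP_hom: "ring_homomorphism f \<Longrightarrow> PP (\<lambda>i. f (x i)) I = f (PP x I)"
  unfolding PP_def by (simp add: hom_prod)

lemma dd_hom: "ring_homomorphism f \<Longrightarrow> dd (\<lambda>i. f (x i)) (\<lambda>K. f (z K)) t J = f (dd x z t J)"
  unfolding dd_def by (simp add: hom_sum hom_mult hom_power hom_sign)

lemma lzc_hom:
  assumes hom: "ring_homomorphism f" and l: "lzc x 1 I a"
  shows "lzc (\<lambda>i. f (x i)) 1 I (f a)"
proof -
  obtain N where "(1 * PP x I) ^ N * a = 0" using l unfolding lzc_def by blast
  then have "f ((1 * PP x I) ^ N * a) = 0" using hom_0[OF hom] by simp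
  then have "(1 * PP (\<lambda>i. f (x i)) I) ^ N * f a = 0" by (simp add: hom_mult[OF hom] hom_power[OF hom] PP_hom[OF hom])
  then show ?thesis unfolding lzc_def by blast
qed

lemma cocyc_hom:
  assumes hom: "ring_homomorphism f" and cz: "cocyc x 1 S k z t"
  shows "cocyc (\<lambda>i. f (x i)) 1 S k (\<lambda>K. f (z K)) t"
  unfolding cocyc_def
proof (intro allI impI)
  fix J assume J: "J \<subseteq> S \<and> card J = Suc k"
  have "lzc x 1 J (dd x z t J)" using cz J unfolding cocyc_def by blast
  then show "lzc (\<lambda>i. f (x i)) 1 J (dd (\<lambda>i. f (x i)) (\<lambda>K. f (z K)) t J)"
    unfolding dd_hom[OF hom] by (rule lzc_hom[OF hom])
qed

lemma cobd_hom:
  assumes hom: "ring_homomorphism f" and cb: "cobd x 1 S k z t"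
  shows "cobd (\<lambda>i. f (x i)) 1 S k (\<lambda>K. f (z K)) t"
proof -
  obtain y u where yu: "\<forall>I. I \<subseteq> S \<and> card I = k \<longrightarrow> lzc x 1 I (z I * (1 * PP x I) ^ u - dd x y u I * (1 * PP x I) ^ t)"
    using cb unfolding cobd_def by blast
  have "\<forall>I. I \<subseteq> S \<and> card I = k \<longrightarrow> lzc (\<lambda>i. f (x i)) 1 I (f (z I) * (1 * PP (\<lambda>i. f (x i)) I) ^ u
      - dd (\<lambda>i. f (x i)) (\<lambda>K. f (y K)) u I * (1 * PP (\<lambda>i. f (x i)) I) ^ t)"
  proof (intro allI impI)
    fix I assume "I \<subseteq> S \<and> card I = k"
    then have "lzc (\<lambda>i. f (x i)) 1 I (f (z I * (1 * PP x I) ^ u - dd x y u I * (1 * PP x I) ^ t))"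
      using yu lzc_hom[OF hom] by blast
    then show "lzc (\<lambda>i. f (x i)) 1 I (f (z I) * (1 * PP (\<lambda>i. f (x i)) I) ^ u
      - dd (\<lambda>i. f (x i)) (\<lambda>K. f (y K)) u I * (1 * PP (\<lambda>i. f (x i)) I) ^ t)"
      by (simp add: hom_diff[OF hom] hom_mult[OF hom] hom_power[OF hom] PP_hom[OF hom] dd_hom[OF hom])
  qed
  then show ?thesis unfolding cobd_def by blast
qed

definition MX :: "(nat \<Rightarrow> 'a::comm_ring_1) \<Rightarrow> nat \<Rightarrow> nat set \<Rightarrow> nat set \<Rightarrow> 'a" where
  "MX g t J I = (\<Sum>j\<in>J. if I = J - {j} then cech_sign J j * g j ^ t else 0)"

lemma MX_hom: "ring_homomorphism f \<Longrightarrow> f (MX x t J I) = MX (\<lambda>i. f (x i)) t J I"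
  unfolding MX_def by (simp add: hom_sum hom_0 hom_mult hom_power hom_sign if_distrib cong: if_cong)

lemma dd_matrix:
  assumes Col: "finite Col" and J: "\<And>j. j \<in> J \<Longrightarrow> J - {j} \<in> Col"
  shows "dd g z t J = (\<Sum>I\<in>Col. MX g t J I * z I)"
proof -
  have "(\<Sum>I\<in>Col. MX g t J I * z I) = (\<Sum>I\<in>Col. \<Sum>j\<in>J. (if I = J - {j} then cech_sign J j * g j ^ t * z I else 0))"
    unfolding MX_def sum_distrib_right by (rule sum.cong[OF refl], rule sum.cong[OF refl]) simp
  also have "\<dots> = (\<Sum>j\<in>J. \<Sum>I\<in>Col. (if I = J - {j} then cech_sign J j * g j ^ t * z I else 0))"
    by (rule sum.swap)
  also have "\<dots> = (\<Sum>j\<in>J. cech_sign J j * g j ^ t * z (J - {j}))"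
  proof (rule sum.cong[OF refl])
    fix j assume "j \<in> J"
    then have "J - {j} \<in> Col" using J by blast
    then show "(\<Sum>I\<in>Col. (if I = J - {j} then cech_sign J j * g j ^ t * z I else 0)) = cech_sign J j * g j ^ t * z (J - {j})"
      using sum.delta[OF Col, of "J - {j}" "\<lambda>I. cech_sign J j * g j ^ t * z I"] by simp
  qed
  finally show ?thesis unfolding dd_def by (simp add: algebra_simps)
qed



lemma cobd_zero_fn: "cobd g c S k (\<lambda>_. 0) t"
proof -
  have d0: "dd g (\<lambda>_. 0) 0 I = 0" for I unfolding dd_def by simp
  have "\<forall>I. I \<subseteq> S \<and> card I = k \<longrightarrow> lzc g c I (0 * (c * PP g I) ^ 0 - dd g (\<lambda>_. 0) 0 I * (c * PP g I) ^ t)"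
    unfolding d0 by simp
  then show ?thesis unfolding cobd_def by (intro exI[of _ "\<lambda>_. 0"] exI[of _ 0])
qed

lemma cobd_scale:
  assumes "cobd g c S k z t"
  shows "cobd g c S k (\<lambda>I. b * z I) t"
proof -
  obtain y u where yu: "\<forall>I. I \<subseteq> S \<and> card I = k \<longrightarrow> lzc g c I (z I * (c * PP g I) ^ u - dd g y u I * (c * PP g I) ^ t)"
    using assms unfolding cobd_def by auto
  have "\<forall>I. I \<subseteq> S \<and> card I = k \<longrightarrow> lzc g c I (b * z I * (c * PP g I) ^ u - dd g (\<lambda>K. b * y K) u I * (c * PP g I) ^ t)"
  proof (intro allI impI)
    fix I assume I: "I \<subseteq> S \<and> card I = k"
    have "lzc g c I (z I * (c * PP g I) ^ u - dd g y u I * (c * PP g I) ^ t)" using yu[rule_format, OF I] .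
    then have "lzc g c I (b * (z I * (c * PP g I) ^ u - dd g y u I * (c * PP g I) ^ t))" by (rule lzc_mult)
    then show "lzc g c I (b * z I * (c * PP g I) ^ u - dd g (\<lambda>K. b * y K) u I * (c * PP g I) ^ t)"
      unfolding dd_cmult by (simp add: algebra_simps)
  qed
  then show ?thesis unfolding cobd_def by (intro exI[of _ "\<lambda>K. b * y K"] exI[of _ u])
qed

lemma cobd_plus:
  assumes S: "finite S" and c1: "cobd g 1 S k z1 t" and c2: "cobd g 1 S k z2 t"
  shows "cobd g 1 S k (\<lambda>I. z1 I + z2 I) t"
proof -
  obtain y1 u1 where y1: "\<forall>I. I \<subseteq> S \<and> card I = k \<longrightarrow> lzc g 1 I (z1 I * (1 * PP g I) ^ u1 - dd g y1 u1 I * (1 * PP g I) ^ t)"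
    using c1 unfolding cobd_def by auto
  obtain y2 u2 where y2: "\<forall>I. I \<subseteq> S \<and> card I = k \<longrightarrow> lzc g 1 I (z2 I * (1 * PP g I) ^ u2 - dd g y2 u2 I * (1 * PP g I) ^ t)"
    using c2 unfolding cobd_def by auto
  define y where "y = (\<lambda>K. y1 K * PP g K ^ u2 + y2 K * PP g K ^ u1)"
  have "\<forall>I. I \<subseteq> S \<and> card I = k \<longrightarrow> lzc g 1 I ((z1 I + z2 I) * (1 * PP g I) ^ (u1 + u2) - dd g y (u1 + u2) I * (1 * PP g I) ^ t)"
  proof (intro allI impI)
    fix I assume I: "I \<subseteq> S \<and> card I = k"
    have finI: "finite I" using I S finite_subset by blast
    have dy: "dd g y (u1 + u2) I = PP g I ^ u2 * dd g y1 u1 I + PP g I ^ u1 * dd g y2 u2 I"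
    proof -
      have "dd g y (u1 + u2) I = dd g (\<lambda>K. y1 K * PP g K ^ u2) (u1 + u2) I + dd g (\<lambda>K. y2 K * PP g K ^ u1) (u2 + u1) I"
        unfolding y_def dd_add by (simp add: add.commute)
      also have "\<dots> = PP g I ^ u2 * dd g y1 u1 I + PP g I ^ u1 * dd g y2 u2 I"
        unfolding dd_raise[OF finI, where y=y1 and d=u2 and u=u1 and g=g]
          dd_raise[OF finI, where y=y2 and d=u1 and u=u2 and g=g] ..
      finally show ?thesis .
    qed
    have eq: "(z1 I + z2 I) * (1 * PP g I) ^ (u1 + u2) - dd g y (u1 + u2) I * (1 * PP g I) ^ t
      = PP g I ^ u2 * (z1 I * (1 * PP g I) ^ u1 - dd g y1 u1 I * (1 * PP g I) ^ t)
        + PP g I ^ u1 * (z2 I * (1 * PP g I) ^ u2 - dd g y2 u2 I * (1 * PP g I) ^ t)"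
      unfolding dy by (simp add: power_add algebra_simps)
    show "lzc g 1 I ((z1 I + z2 I) * (1 * PP g I) ^ (u1 + u2) - dd g y (u1 + u2) I * (1 * PP g I) ^ t)"
      unfolding eq using y1[rule_format, OF I] y2[rule_format, OF I] by (intro lzc_add lzc_mult)
  qed
  then show ?thesis unfolding cobd_def by (intro exI[of _ y] exI[of _ "u1 + u2"])
qed

lemma cobd_sum:
  assumes S: "finite S" and A: "finite A" and all: "\<And>l. l \<in> A \<Longrightarrow> cobd g 1 S k (zz l) t"
  shows "cobd g 1 S k (\<lambda>I. \<Sum>l\<in>A. zz l I) t"
  using A all
proof (induction A rule: finite_induct)
  case empty
  show ?case using cobd_zero_fn by simp
next
  case (insert a A)
  have "cobd g 1 S k (\<lambda>I. zz a I + (\<Sum>l\<in>A. zz l I)) t"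
    using insert by (intro cobd_plus[OF S]) auto
  then show ?case using insert by simp
qed

lemma cobd_cong_k: "(\<And>I. I \<subseteq> S \<Longrightarrow> card I = k \<Longrightarrow> z I = z2 I) \<Longrightarrow> cobd g c S k z t \<longleftrightarrow> cobd g c S k z2 t"
proof -
  assume a: "\<And>I. I \<subseteq> S \<Longrightarrow> card I = k \<Longrightarrow> z I = z2 I"
  have "\<And>y u I. I \<subseteq> S \<and> card I = k \<longrightarrow> lzc g c I (z I * (c * PP g I) ^ u - dd g y u I * (c * PP g I) ^ t)
     \<longleftrightarrow> I \<subseteq> S \<and> card I = k \<longrightarrow> lzc g c I (z2 I * (c * PP g I) ^ u - dd g y u I * (c * PP g I) ^ t)"
    using a by auto
  then show ?thesis unfolding cobd_def by presburger
qed



lemma col_card_remove: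
  assumes "I \<subseteq> S" "card I = k" "finite S" "j \<in> I"
  shows "I - {j} \<in> {K. K \<subseteq> S \<and> card K = k - 1}"
proof -
  have "finite I" using assms finite_subset by blast
  then show ?thesis using assms by (auto simp: card_Diff_singleton)
qed

lemma ff_cobd:
  fixes f :: "'a::comm_ring_1 \<Rightarrow> 'b::comm_ring_1" and x :: "nat \<Rightarrow> 'a"
  assumes hom: "ring_homomorphism f" and fl: "flat_hom f" and lmt: "local_ring_max mt"
    and loc: "\<forall>a\<in>mt. f a \<in> m" and mI: "is_ideal m" and m1: "1 \<notin> m" and S: "finite S"
    and cb: "cobd (\<lambda>i. f (x i)) 1 S k (\<lambda>I. f (z I)) t"
  shows "cobd x 1 S k z t"
proof -
  define xb where "xb = (\<lambda>i. f (x i))"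
  define Col where "Col = {I. I \<subseteq> S \<and> card I = k}"
  define Col' where "Col' = {K. K \<subseteq> S \<and> card K = k - 1}"
  have fCol: "finite Col" unfolding Col_def by (rule finite_subsets_card[OF S])
  have fCol': "finite Col'" unfolding Col'_def by (rule finite_subsets_card[OF S])
  obtain y u where yu: "\<forall>I. I \<subseteq> S \<and> card I = k \<longrightarrow> lzc xb 1 I (f (z I) * (1 * PP xb I) ^ u - dd xb y u I * (1 * PP xb I) ^ t)"
    using cb unfolding cobd_def xb_def by auto
  have "\<And>I. I \<in> Col \<Longrightarrow> lzc xb 1 I (f (z I) * (1 * PP xb I) ^ u - dd xb y u I * (1 * PP xb I) ^ t)"
  proof -
    fix I assume "I \<in> Col"
    then have I: "I \<subseteq> S \<and> card I = k" unfolding Col_def by blast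
    show "lzc xb 1 I (f (z I) * (1 * PP xb I) ^ u - dd xb y u I * (1 * PP xb I) ^ t)" using yu[rule_format, OF I] .
  qed
  then obtain N where N: "\<forall>I\<in>Col. (1 * PP xb I) ^ N * (f (z I) * (1 * PP xb I) ^ u - dd xb y u I * (1 * PP xb I) ^ t) = 0"
    using lzc_uniform[OF fCol, of xb 1 "\<lambda>I. f (z I) * (1 * PP xb I) ^ u - dd xb y u I * (1 * PP xb I) ^ t"] by blast
  define L where "L = (\<lambda>I K. PP x I ^ (N + t) * MX x u I K)"
  define v where "v = (\<lambda>I. PP x I ^ (N + u) * z I)"
  have ddm: "\<And>g w I. I \<in> Col \<Longrightarrow> dd g w u I = (\<Sum>K\<in>Col'. MX g u I K * w K)"
  proof -
    fix g :: "nat \<Rightarrow> 'c::comm_ring_1" and w I assume "I \<in> Col"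
    then have I: "I \<subseteq> S" "card I = k" unfolding Col_def by auto
    show "dd g w u I = (\<Sum>K\<in>Col'. MX g u I K * w K)"
      by (rule dd_matrix[OF fCol']) (use col_card_remove[OF I S] in \<open>simp add: Col'_def\<close>)
  qed
  have sol: "\<forall>I\<in>Col. (\<Sum>K\<in>Col'. f (L I K) * y K) = f (v I)"
  proof
    fix I assume I: "I \<in> Col"
    define P where "P = f (PP x I)"
    have PP: "PP xb I = P" unfolding P_def xb_def by (rule PP_hom[OF hom])
    have D: "(\<Sum>K\<in>Col'. f (L I K) * y K) = P ^ (N + t) * dd xb y u I"
      unfolding ddm[OF I] L_def P_def xb_def
      by (simp add: hom_mult[OF hom] hom_power[OF hom] MX_hom[OF hom] sum_distrib_left algebra_simps)
    have V: "f (v I) = P ^ (N + u) * f (z I)" unfolding v_def P_def by (simp add: hom_mult[OF hom] hom_power[OF hom])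
    have "(1 * PP xb I) ^ N * (f (z I) * (1 * PP xb I) ^ u - dd xb y u I * (1 * PP xb I) ^ t) = 0" using N I by blast
    then have "P ^ N * (f (z I) * P ^ u - dd xb y u I * P ^ t) = 0" unfolding PP by simp
    then have "P ^ (N + u) * f (z I) - P ^ (N + t) * dd xb y u I = 0" by (simp add: power_add algebra_simps)
    then show "(\<Sum>K\<in>Col'. f (L I K) * y K) = f (v I)" unfolding D V by simp
  qed
  obtain w' where w': "\<forall>I\<in>Col. (\<Sum>K\<in>Col'. L I K * w' K) = v I"
    using ff_image[OF hom fl lmt loc mI m1 fCol' fCol sol] by blast
  have "\<forall>I. I \<subseteq> S \<and> card I = k \<longrightarrow> lzc x 1 I (z I * (1 * PP x I) ^ u - dd x w' u I * (1 * PP x I) ^ t)"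
  proof (intro allI impI)
    fix I assume I0: "I \<subseteq> S \<and> card I = k"
    then have I: "I \<in> Col" unfolding Col_def by blast
    have "(\<Sum>K\<in>Col'. L I K * w' K) = PP x I ^ (N + t) * dd x w' u I"
      unfolding ddm[OF I] L_def by (simp add: sum_distrib_left algebra_simps)
    then have "PP x I ^ (N + t) * dd x w' u I = PP x I ^ (N + u) * z I" using w' I unfolding v_def by simp
    then have "(1 * PP x I) ^ N * (z I * (1 * PP x I) ^ u - dd x w' u I * (1 * PP x I) ^ t) = 0"
      by (simp add: power_add algebra_simps)
    then show "lzc x 1 I (z I * (1 * PP x I) ^ u - dd x w' u I * (1 * PP x I) ^ t)" unfolding lzc_def by blast
  qed
  then show ?thesis unfolding cobd_def by (intro exI[of _ w'] exI[of _ u])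
qed



lemma decompose:
  fixes f :: "'a::comm_ring_1 \<Rightarrow> 'b::comm_ring_1" and x :: "nat \<Rightarrow> 'a"
  assumes hom: "ring_homomorphism f" and fl: "flat_hom f" and S: "finite S"
    and cz: "cocyc (\<lambda>i. f (x i)) 1 S k w t"
  shows "\<exists>(K::nat) v yv. (\<forall>I. I \<subseteq> S \<and> card I = k \<longrightarrow> w I = (\<Sum>l<K. f (v l I) * yv l))
           \<and> (\<forall>l<K. cocyc x 1 S k (v l) t)"
proof -
  define xb where "xb = (\<lambda>i. f (x i))"
  define Col where "Col = {I. I \<subseteq> S \<and> card I = k}"
  define Row where "Row = {J. J \<subseteq> S \<and> card J = Suc k}"
  have fCol: "finite Col" unfolding Col_def by (rule finite_subsets_card[OF S])
  have fRow: "finite Row" unfolding Row_def by (rule finite_subsets_card[OF S])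
  have "\<And>J. J \<in> Row \<Longrightarrow> lzc xb 1 J (dd xb w t J)"
  proof -
    fix J assume "J \<in> Row"
    then have J: "J \<subseteq> S \<and> card J = Suc k" unfolding Row_def by blast
    show "lzc xb 1 J (dd xb w t J)" using cz[unfolded cocyc_def, rule_format, OF J] unfolding xb_def .
  qed
  then obtain N where N: "\<forall>J\<in>Row. (1 * PP xb J) ^ N * dd xb w t J = 0"
    using lzc_uniform[OF fRow, of xb 1 "\<lambda>J. dd xb w t J"] by blast
  have ddm: "\<And>g z J. J \<in> Row \<Longrightarrow> dd g z t J = (\<Sum>I\<in>Col. MX g t J I * z I)"
  proof -
    fix g :: "nat \<Rightarrow> 'c::comm_ring_1" and z J assume "J \<in> Row"
    then have J: "J \<subseteq> S" "card J = Suc k" unfolding Row_def by auto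
    show "dd g z t J = (\<Sum>I\<in>Col. MX g t J I * z I)"
      by (rule dd_matrix[OF fCol]) (use col_card_remove[OF J S] in \<open>simp add: Col_def\<close>)
  qed
  define L where "L = (\<lambda>J I. PP x J ^ N * MX x t J I)"
  have rel: "\<forall>J\<in>Row. (\<Sum>I\<in>Col. f (L J I) * w I) = 0"
  proof
    fix J assume J: "J \<in> Row"
    have "(\<Sum>I\<in>Col. f (L J I) * w I) = (1 * PP xb J) ^ N * dd xb w t J"
      unfolding ddm[OF J] L_def xb_def
      by (simp add: hom_mult[OF hom] hom_power[OF hom] MX_hom[OF hom] PP_hom[OF hom] sum_distrib_left algebra_simps)
    also have "\<dots> = 0" using N J by blast
    finally show "(\<Sum>I\<in>Col. f (L J I) * w I) = 0" .
  qed
  obtain K :: nat and V yv where KV: "\<forall>I\<in>Col. w I = (\<Sum>l<K. f (V I l) * yv l)"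
      and KV2: "\<forall>l<K. \<forall>J\<in>Row. (\<Sum>I\<in>Col. L J I * V I l) = 0"
    using flat_kernel[OF hom fl fCol fRow rel] by blast
  define v where "v = (\<lambda>l I. V I l)"
  have "\<forall>l<K. cocyc x 1 S k (v l) t"
  proof (intro allI impI)
    fix l assume l: "l < K"
    show "cocyc x 1 S k (v l) t" unfolding cocyc_def
    proof (intro allI impI)
      fix J assume J0: "J \<subseteq> S \<and> card J = Suc k"
      then have J: "J \<in> Row" unfolding Row_def by blast
      have "(1 * PP x J) ^ N * dd x (v l) t J = (\<Sum>I\<in>Col. L J I * V I l)"
        unfolding ddm[OF J] L_def v_def by (simp add: sum_distrib_left algebra_simps)
      also have "\<dots> = 0" using KV2 l J by blast
      finally show "lzc x 1 J (dd x (v l) t J)" unfolding lzc_def by blast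
    qed
  qed
  moreover have "\<forall>I. I \<subseteq> S \<and> card I = k \<longrightarrow> w I = (\<Sum>l<K. f (v l I) * yv l)"
    using KV unfolding Col_def v_def by blast
  ultimately show ?thesis by blast
qed

lemma frob_base:
  fixes f :: "'a::comm_ring_1 \<Rightarrow> 'b::comm_ring_1" and x :: "nat \<Rightarrow> 'a"
  assumes hom: "ring_homomorphism f" and fl: "flat_hom f" and lmt: "local_ring_max mt"
    and loc: "\<forall>a\<in>mt. f a \<in> m" and mI: "is_ideal m" and m1: "1 \<notin> m" and S: "finite S"
    and pA: "prime CHAR('a)" and qA: "q = CHAR('a) ^ s"
    and pB: "prime CHAR('b)" and qB: "q = CHAR('b) ^ s"
  shows "frobnz x S q k \<longleftrightarrow> frobnz (\<lambda>i. f (x i)) S q k"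
proof
  assume "frobnz x S q k"
  then obtain z t where cz: "cocyc x 1 S k z t" and ncb: "\<not> cobd x 1 S k (\<lambda>I. z I ^ q) (t * q)"
    unfolding frobnz_def by blast
  have "cocyc (\<lambda>i. f (x i)) 1 S k (\<lambda>K. f (z K)) t" by (rule cocyc_hom[OF hom cz])
  moreover have "\<not> cobd (\<lambda>i. f (x i)) 1 S k (\<lambda>I. f (z I) ^ q) (t * q)"
  proof
    assume "cobd (\<lambda>i. f (x i)) 1 S k (\<lambda>I. f (z I) ^ q) (t * q)"
    then have "cobd (\<lambda>i. f (x i)) 1 S k (\<lambda>I. f (z I ^ q)) (t * q)" by (simp add: hom_power[OF hom])
    then have "cobd x 1 S k (\<lambda>I. z I ^ q) (t * q)" by (rule ff_cobd[OF hom fl lmt loc mI m1 S])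
    then show False using ncb by blast
  qed
  ultimately show "frobnz (\<lambda>i. f (x i)) S q k" unfolding frobnz_def by blast
next
  assume "frobnz (\<lambda>i. f (x i)) S q k"
  then obtain w t where cw: "cocyc (\<lambda>i. f (x i)) 1 S k w t" and ncb: "\<not> cobd (\<lambda>i. f (x i)) 1 S k (\<lambda>I. w I ^ q) (t * q)"
    unfolding frobnz_def by blast
  show "frobnz x S q k"
  proof (rule ccontr)
    assume nf: "\<not> frobnz x S q k"
    have allc: "\<And>z. cocyc x 1 S k z t \<Longrightarrow> cobd x 1 S k (\<lambda>I. z I ^ q) (t * q)"
      using nf unfolding frobnz_def by blast
    obtain K :: nat and v yv where wv: "\<forall>I. I \<subseteq> S \<and> card I = k \<longrightarrow> w I = (\<Sum>l<K. f (v l I) * yv l)"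
        and cv: "\<forall>l<K. cocyc x 1 S k (v l) t"
      using decompose[OF hom fl S cw] by blast
    have "cobd (\<lambda>i. f (x i)) 1 S k (\<lambda>I. \<Sum>l\<in>{..<K}. yv l ^ q * f (v l I ^ q)) (t * q)"
    proof (rule cobd_sum[OF S])
      fix l assume "l \<in> {..<K}"
      then have "cocyc x 1 S k (v l) t" using cv by simp
      then have "cobd x 1 S k (\<lambda>I. v l I ^ q) (t * q)" by (rule allc)
      then have "cobd (\<lambda>i. f (x i)) 1 S k (\<lambda>I. f (v l I ^ q)) (t * q)" by (rule cobd_hom[OF hom])
      then show "cobd (\<lambda>i. f (x i)) 1 S k (\<lambda>I. yv l ^ q * f (v l I ^ q)) (t * q)" by (rule cobd_scale)
    qed simp
    moreover have "\<And>I. I \<subseteq> S \<Longrightarrow> card I = k \<Longrightarrow> (\<Sum>l\<in>{..<K}. yv l ^ q * f (v l I ^ q)) = w I ^ q"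
    proof -
      fix I assume "I \<subseteq> S" "card I = k"
      then have "w I = (\<Sum>l<K. f (v l I) * yv l)" using wv by simp
      then have "w I ^ q = (\<Sum>l<K. f (v l I) * yv l) ^ q" by simp
      also have "\<dots> = (\<Sum>l<K. (f (v l I) * yv l) ^ q)" by (rule frob_sum[OF pB qB])
      also have "\<dots> = (\<Sum>l\<in>{..<K}. yv l ^ q * f (v l I ^ q))"
        by (simp add: hom_power[OF hom] power_mult_distrib mult.commute)
      finally show "(\<Sum>l\<in>{..<K}. yv l ^ q * f (v l I ^ q)) = w I ^ q" by simp
    qed
    ultimately have "cobd (\<lambda>i. f (x i)) 1 S k (\<lambda>I. w I ^ q) (t * q)"
      using cobd_cong_k[of S k "\<lambda>I. \<Sum>l\<in>{..<K}. yv l ^ q * f (v l I ^ q)" "\<lambda>I. w I ^ q"] by simp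
    then show False using ncb by blast
  qed
qed



theorem lemma3p2:
  fixes \<phi> :: "'a::comm_ring_1 \<Rightarrow> 'b::comm_ring_1"
    and mt :: "'a set" and m :: "'b set" and p :: nat
  assumes "noetherian_ring TYPE('a)" and "noetherian_ring TYPE('b)"
    and "local_ring_max mt" and "local_ring_max m"
    and "prime p" and "CHAR('a) = p" and "CHAR('b) = p"
    and "ring_homomorphism \<phi>" and "flat_hom \<phi>"
    and "ideal_gen (\<phi> ` mt) = m"
  shows "F_depth_L mt = F_depth_L m"
proof -
  note nA = assms(1) and nB = assms(2) and lmt = assms(3) and lm = assms(4)
  note hom = assms(8) and fl = assms(9) and gen = assms(10)
  have pA: "prime CHAR('a)" using assms(5,6) by simp
  have pB: "prime CHAR('b)" using assms(5,7) by simp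
  have isA: "is_ideal mt" using lmt unfolding local_ring_max_def maximal_ideal_def by blast
  have isB: "is_ideal m" and m1: "1 \<notin> m" using lm unfolding local_ring_max_def maximal_ideal_def by blast+
  define xA where "xA = (SOME xs. ideal_gen (set xs) = mt)"
  define xB where "xB = (SOME xs. ideal_gen (set xs) = m)"
  have gA: "ideal_gen (set xA) = mt"
  proof -
    have "\<exists>xs. ideal_gen (set xs) = mt" using nA isA unfolding noetherian_ring_def by blast
    then show ?thesis unfolding xA_def by (rule someI_ex)
  qed
  have gB: "ideal_gen (set xB) = m"
  proof -
    have "\<exists>xs. ideal_gen (set xs) = m" using nB isB unfolding noetherian_ring_def by blast
    then show ?thesis unfolding xB_def by (rule someI_ex)
  qed
  have loc: "\<forall>a\<in>mt. \<phi> a \<in> m"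
  proof
    fix a assume "a \<in> mt"
    then have "\<phi> a \<in> \<phi> ` mt" by blast
    then show "\<phi> a \<in> m" using in_ideal_gen gen by blast
  qed
  have gX: "ideal_gen (set (map \<phi> xA)) = ideal_gen (set xB)"
  proof -
    have "ideal_gen (set (map \<phi> xA)) = ideal_gen (\<phi> ` set xA)" by simp
    also have "\<dots> = ideal_gen (\<phi> ` ideal_gen (set xA))" using ideal_gen_hom[OF hom] by simp
    also have "\<dots> = m" using gA gen by simp
    finally show ?thesis using gB by simp
  qed
  have eqv: "frob_nonzero_on xA i s \<longleftrightarrow> frob_nonzero_on xB i s" for i s
  proof -
    have qq: "CHAR('b) ^ s = CHAR('a) ^ s" using assms(6,7) by simp
    have "frob_nonzero_on xA i s \<longleftrightarrow> frobnz (nth xA) {..<length xA} (CHAR('a) ^ s) i"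
      by (rule frob_bridge)
    also have "\<dots> \<longleftrightarrow> frobnz (\<lambda>j. \<phi> (nth xA j)) {..<length xA} (CHAR('a) ^ s) i"
      by (rule frob_base[OF hom fl lmt loc isB m1 _ pA refl pB qq[symmetric]]) simp
    also have "\<dots> \<longleftrightarrow> frobnz (nth (map \<phi> xA)) {..<length (map \<phi> xA)} (CHAR('b) ^ s) i"
      unfolding qq length_map by (rule frobnz_gcong) simp
    also have "\<dots> \<longleftrightarrow> frobnz (nth xB) {..<length xB} (CHAR('b) ^ s) i"
      by (rule indep[OF gX pB refl])
    also have "\<dots> \<longleftrightarrow> frob_nonzero_on xB i s"
      by (rule frob_bridge[symmetric])
    finally show ?thesis .
  qed
  have fd: "fdepth_prop xA = fdepth_prop xB"
  proof
    fix i show "fdepth_prop xA i = fdepth_prop xB i" unfolding fdepth_prop_def using eqv by blast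
  qed
  show ?thesis
    unfolding F_depth_L_def Let_def xA_def[symmetric] xB_def[symmetric] fd ..
qed


end
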